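(* Let $p\in[1,\infty)$. The composition $\mathcal Q_\phi\mathcal T^\pi$ is a $\gamma$-contraction with respect to $\bar w_p$, i.e. $\bar w_p(\mathcal Q_\phi\mathcal T^\pi\mu,\mathcal Q_\phi\mathcal T^\pi\nu)\le\gamma\,\bar w_p(\mu,\nu)$ for all $\mu,\nu$ in the domain. Furthermore, the operator $\Pi_{w_1}\mathcal Q_\phi\mathcal T^\pi$ is a $\gamma$-contraction with respect to $\bar w_\infty$.
   Context: Setting: an infinite-horizon discounted MDP with finite state set $\mathcal S$, finite action set $\mathcal A$, transition kernel $\mathcal P(\cdot\mid s,a)$, bounded reward distributions $\mathcal R(s,a)$ on $\mathbb R$, discount $\gamma\in(0,1)$, and a policy $\pi$. For a distribution $\nu$ on $\mathbb R$, $F_\nu$ is its CDF and $F_\nu^{-1}(\tau)=\inf\{x:\tau\le F_\nu(x)\}$ its quantile function. The distributional Bellman operator on $\eta\in\mathscr P(\mathbb R)^{\mathcal S\times\mathcal A}$ is defined by $F_{\mathcal T^\pi\eta(s,a)}(z)=\sum_{s',a'}\mathcal P(s'\mid s,a)\pi(a'\mid s')\int F_{\eta(s',a')}\big(\tfrac{z-r}{\gamma}\big)\,dF_{\mathcal R(s,a)}(r)$. Wasserstein distances: $w_p(\mu,\nu)=\big(\int_0^1|F_\mu^{-1}(\tau)-F_\nu^{-1}(\tau)|^p d\tau\big)^{1/p}$, $w_\infty(\mu,\nu)=\sup_{\tau\in(0,1)}|F^{-1}_\mu(\tau)-F^{-1}_\nu(\tau)|$, and $\bar w_p(\eta,\eta')=\sup_{(s,a)}w_p(\eta(s,a),\eta'(s,a))$.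 Quantile distortion operator: for a function $\phi:\mathcal S\times\mathcal A\times[0,1]\to\mathbb R$, $\mathcal Q_\phi\eta$ is defined by $F^{-1}_{\mathcal Q_\phi\eta(s,a)}(\tau)=F^{-1}_{\eta(s,a)}(\tau)-\phi(s,a,\tau)$; $\phi$ is assumed such that this is the quantile function of a probability distribution for every $\eta$ considered (so $\mathcal Q_\phi$ is well defined). Quantile projection: for fixed $0=\tau_0<\tau_1<\dots<\tau_M=1$, $\Pi_{w_1}\eta(s,a)=\frac1M\sum_{m=1}^M\delta_{F^{-1}_{\eta(s,a)}(\hat\tau_m)}$ with $\hat\tau_m=\frac{\tau_{m-1}+\tau_m}{2}$, i.e. the $w_1$-minimizing projection onto distributions of the form $\frac1M\sum_m\delta_{\theta_m}$. Distributions are taken with bounded support (so all distances are finite). *)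

theory Defs
  imports "HOL-Probability.Probability"
begin

definition quantile :: "real measure \<Rightarrow> real \<Rightarrow> real" where
  "quantile M \<tau> = Inf {x. \<tau> \<le> cdf M x}"

definition bdist :: "real measure \<Rightarrow> bool" where
  "bdist M \<longleftrightarrow> real_distribution M \<and> (\<exists>B. emeasure M (- {-B..B}) = 0)"

definition wass :: "real \<Rightarrow> real measure \<Rightarrow> real measure \<Rightarrow> real" where
  "wass p \<mu> \<nu> =
     (\<integral>\<tau>. indicator {0<..<1} \<tau> * \<bar>quantile \<mu> \<tau> - quantile \<nu> \<tau>\<bar> powr p \<partial>lborel) powr (1 / p)"

definition wass_inf :: "real measure \<Rightarrow> real measure \<Rightarrow> real" where
  "wass_inf \<mu> \<nu> = (SUP \<tau>\<in>{0<..<1}. \<bar>quantile \<mu> \<tau> - quantile \<nu> \<tau>\<bar>)"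

definition bar_wass :: "real \<Rightarrow> ('s \<Rightarrow> 'a \<Rightarrow> real measure) \<Rightarrow> ('s \<Rightarrow> 'a \<Rightarrow> real measure) \<Rightarrow> real" where
  "bar_wass p \<eta> \<eta>' = (SUP sa\<in>UNIV. wass p (\<eta> (fst sa) (snd sa)) (\<eta>' (fst sa) (snd sa)))"

definition bar_wass_inf :: "('s \<Rightarrow> 'a \<Rightarrow> real measure) \<Rightarrow> ('s \<Rightarrow> 'a \<Rightarrow> real measure) \<Rightarrow> real" where
  "bar_wass_inf \<eta> \<eta>' = (SUP sa\<in>UNIV. wass_inf (\<eta> (fst sa) (snd sa)) (\<eta>' (fst sa) (snd sa)))"

definition bellman_cdf ::
  "('s::finite \<Rightarrow> 'a::finite \<Rightarrow> 's pmf) \<Rightarrow> ('s \<Rightarrow> 'a pmf) \<Rightarrow> ('s \<Rightarrow> 'a \<Rightarrow> real measure) \<Rightarrow> real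
    \<Rightarrow> ('s \<Rightarrow> 'a \<Rightarrow> real measure) \<Rightarrow> 's \<Rightarrow> 'a \<Rightarrow> real \<Rightarrow> real" where
  "bellman_cdf P \<pi> R \<gamma> \<eta> s a z =
     (\<Sum>s'\<in>UNIV. \<Sum>a'\<in>UNIV. pmf (P s a) s' * pmf (\<pi> s') a' *
        (\<integral>r. cdf (\<eta> s' a') ((z - r) / \<gamma>) \<partial>(R s a)))"

definition bellman ::
  "('s::finite \<Rightarrow> 'a::finite \<Rightarrow> 's pmf) \<Rightarrow> ('s \<Rightarrow> 'a pmf) \<Rightarrow> ('s \<Rightarrow> 'a \<Rightarrow> real measure) \<Rightarrow> real
    \<Rightarrow> ('s \<Rightarrow> 'a \<Rightarrow> real measure) \<Rightarrow> 's \<Rightarrow> 'a \<Rightarrow> real measure" where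
  "bellman P \<pi> R \<gamma> \<eta> s a = interval_measure (bellman_cdf P \<pi> R \<gamma> \<eta> s a)"

definition qdist_ok :: "('s \<Rightarrow> 'a \<Rightarrow> real \<Rightarrow> real) \<Rightarrow> ('s \<Rightarrow> 'a \<Rightarrow> real measure) \<Rightarrow> bool" where
  "qdist_ok \<phi> \<eta> \<longleftrightarrow> (\<forall>s a. \<exists>M. bdist M \<and>
      (\<forall>\<tau>\<in>{0<..<1}. quantile M \<tau> = quantile (\<eta> s a) \<tau> - \<phi> s a \<tau>))"

definition qdistort :: "('s \<Rightarrow> 'a \<Rightarrow> real \<Rightarrow> real) \<Rightarrow> ('s \<Rightarrow> 'a \<Rightarrow> real measure) \<Rightarrow> 's \<Rightarrow> 'a \<Rightarrow> real measure" where
  "qdistort \<phi> \<eta> s a = (SOME M. bdist M \<and>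
      (\<forall>\<tau>\<in>{0<..<1}. quantile M \<tau> = quantile (\<eta> s a) \<tau> - \<phi> s a \<tau>))"

definition qproj :: "nat \<Rightarrow> (nat \<Rightarrow> real) \<Rightarrow> ('s \<Rightarrow> 'a \<Rightarrow> real measure) \<Rightarrow> 's \<Rightarrow> 'a \<Rightarrow> real measure" where
  "qproj m \<tau> \<eta> s a = measure_pmf (map_pmf (\<lambda>k. quantile (\<eta> s a) ((\<tau> (k - 1) + \<tau> k) / 2))
                                        (pmf_of_set {1..m}))"

end

theory Submission
  imports Defs
begin

definition unifm :: "real measure" where "unifm = restrict_space lborel {0<..<1}"

lemma space_unifm[simp]: "space unifm = {0<..<1}"
  by (simp add: unifm_def space_restrict_space)

lemma sets_unifm: "sets unifm = sets (restrict_space borel {0<..<1})"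
  by (simp add: unifm_def sets_restrict_space)

lemma emeasure_unifm: "A \<subseteq> {0<..<1} \<Longrightarrow> emeasure unifm A = emeasure lborel A"
  unfolding unifm_def by (rule emeasure_restrict_space) auto

lemma prob_space_unifm: "prob_space unifm"
  by (rule prob_spaceI) (simp add: emeasure_unifm)

interpretation UP: prob_space unifm by (rule prob_space_unifm)

lemma unifm_id: "(\<lambda>x. x) \<in> borel_measurable unifm"
  unfolding unifm_def by (rule measurable_restrict_space1) simp

lemma unifm_le_sets[measurable]: "{u\<in>space unifm. u \<le> c} \<in> sets unifm"
proof -
  have "(\<lambda>x. x) -` {..c} \<inter> space unifm \<in> sets unifm" by (rule measurable_sets[OF unifm_id]) auto
  moreover have "(\<lambda>x. x) -` {..c} \<inter> space unifm = {u\<in>space unifm. u \<le> c}" by auto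
  ultimately show ?thesis by simp
qed

lemma quantile_le_iff:
  assumes M: "real_distribution M" and u: "0 < u" "u < 1"
  shows "quantile M u \<le> x \<longleftrightarrow> u \<le> cdf M x"
proof -
  interpret real_distribution M by (rule M)
  define S where "S = {x. u \<le> cdf M x}"
  have "eventually (\<lambda>x. u < cdf M x) at_top"
    using order_tendstoD(1)[OF cdf_lim_at_top_prob u(2)] .
  then obtain N where "\<And>x. x \<ge> N \<Longrightarrow> u < cdf M x" by (auto simp: eventually_at_top_linorder)
  then have ne: "S \<noteq> {}" unfolding S_def by (metis less_imp_le mem_Collect_eq order_refl empty_iff)
  have "eventually (\<lambda>x. cdf M x < u) at_bot"
    using order_tendstoD(2)[OF cdf_lim_at_bot u(1)] .
  then obtain N' where N': "\<And>x. x \<le> N' \<Longrightarrow> cdf M x < u" by (auto simp: eventually_at_bot_linorder)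
  have bdd: "bdd_below S" unfolding S_def bdd_below_def
    by (metis N' linorder_not_le mem_Collect_eq order_less_imp_le)
  have lim: "((cdf M) \<longlongrightarrow> cdf M (Inf S)) (at_right (Inf S))"
    using cdf_is_right_cont[of "Inf S"] by (simp add: continuous_within)
  have ev: "eventually (\<lambda>x. u \<le> cdf M x) (at_right (Inf S))"
  proof -
    have "\<forall>y>Inf S. u \<le> cdf M y"
    proof (intro allI impI)
      fix y assume "Inf S < y"
      then obtain z where "z \<in> S" "z < y" using cInf_less_iff[OF ne bdd] by auto
      then show "u \<le> cdf M y" unfolding S_def using cdf_nondecreasing[of z y] by auto
    qed
    then show ?thesis by (auto intro: eventually_mono[OF eventually_at_right_less])
  qed
  have mem: "u \<le> cdf M (Inf S)"
    by (rule tendsto_lowerbound[OF lim ev]) simp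
  show ?thesis
  proof
    assume "quantile M u \<le> x"
    then show "u \<le> cdf M x" using mem cdf_nondecreasing[of "Inf S" x]
      unfolding quantile_def S_def by auto
  next
    assume "u \<le> cdf M x"
    then show "quantile M u \<le> x" unfolding quantile_def S_def[symmetric]
      by (intro cInf_lower bdd) (simp add: S_def)
  qed
qed

lemma quantile_self:
  assumes M: "real_distribution M" and u: "0 < u" "u < 1"
  shows "u \<le> cdf M (quantile M u)"
  using quantile_le_iff[OF assms, of "quantile M u"] by simp

lemma quantile_mono:
  assumes M: "real_distribution M" and "0 < u" "u \<le> v" "v < 1"
  shows "quantile M u \<le> quantile M v"
  using assms quantile_le_iff[OF M, of u "quantile M v"] quantile_self[OF M, of v] by auto

lemma quantile_measurable:
  assumes M: "real_distribution M"
  shows "quantile M \<in> borel_measurable unifm"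
proof -
  have "mono_on {0<..<1} (quantile M)"
    by (rule mono_onI) (use quantile_mono[OF M] in auto)
  from borel_measurable_mono_on_fnc[OF this] show ?thesis
    by (simp only: measurable_cong_sets[OF sets_unifm refl])
qed

lemma emeasure_unifm_quantile:
  assumes M: "real_distribution M"
  shows "emeasure unifm {u\<in>space unifm. quantile M u \<le> y} = ennreal (cdf M y)"
proof -
  interpret real_distribution M by (rule M)
  have eq: "{u\<in>space unifm. quantile M u \<le> y} = {u\<in>{0<..<1}. u \<le> cdf M y}"
    using quantile_le_iff[OF M] by auto
  show ?thesis
  proof (cases "cdf M y < 1")
    case True
    then have "{u\<in>{0<..<1}. u \<le> cdf M y} = {0<..cdf M y}" by auto
    moreover have "{0<..cdf M y} \<subseteq> {0<..<1}" using True by auto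
    ultimately show ?thesis using True eq cdf_nonneg[of y] by (simp add: emeasure_unifm)
  next
    case False
    then have "cdf M y = 1" using cdf_bounded_prob[of y] by auto
    moreover have "{u\<in>{0<..<1}. u \<le> (1::real)} = {0<..<1}" by auto
    ultimately show ?thesis using eq by (simp add: emeasure_unifm)
  qed
qed

lemma nn_integral_unifm_quantile:
  assumes M: "real_distribution M"
  shows "(\<integral>\<^sup>+u. (if quantile M u \<le> y then 1 else 0) \<partial>unifm) = ennreal (cdf M y)"
proof -
  have "(\<integral>\<^sup>+u. (if quantile M u \<le> y then 1 else 0) \<partial>unifm) =
        (\<integral>\<^sup>+u. indicator {u\<in>space unifm. quantile M u \<le> y} u \<partial>unifm)"
    by (intro nn_integral_cong) (auto simp: indicator_def)
  also have "\<dots> = emeasure unifm {u\<in>space unifm. quantile M u \<le> y}"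
    using quantile_measurable[OF M] by (intro nn_integral_indicator) measurable
  finally show ?thesis using emeasure_unifm_quantile[OF M] by simp
qed


lemma rd_cdf_mono: "real_distribution M \<Longrightarrow> x \<le> y \<Longrightarrow> cdf M x \<le> cdf M y"
  by (metis real_distribution.finite_borel_measure_M finite_borel_measure.cdf_nondecreasing)
lemma rd_cdf_rc: "real_distribution M \<Longrightarrow> continuous (at_right a) (cdf M)"
  by (metis real_distribution.finite_borel_measure_M finite_borel_measure.cdf_is_right_cont)
lemma rd_cdf_bot: "real_distribution M \<Longrightarrow> (cdf M \<longlongrightarrow> 0) at_bot"
  by (metis real_distribution.finite_borel_measure_M finite_borel_measure.cdf_lim_at_bot)
lemma rd_cdf_top: "real_distribution M \<Longrightarrow> (cdf M \<longlongrightarrow> 1) at_top"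
  by (rule real_distribution.cdf_lim_at_top_prob)
lemma rd_cdf_nonneg: "real_distribution M \<Longrightarrow> 0 \<le> cdf M x"
  by (metis real_distribution.finite_borel_measure_M finite_borel_measure.cdf_nonneg)
lemma rd_cdf_le1: "real_distribution M \<Longrightarrow> cdf M x \<le> 1"
  by (rule real_distribution.cdf_bounded_prob)

lemma cdf_mono_measurable:
  assumes "real_distribution N"
  shows "cdf N \<in> borel_measurable borel"
  by (rule borel_measurable_mono) (use rd_cdf_mono[OF assms] in \<open>auto simp: mono_def\<close>)

lemma cdf_D:
  assumes Rm: "real_distribution Rm" and N: "real_distribution N" and g: "0 < \<gamma>"
  shows "cdf (distr (Rm \<Otimes>\<^sub>M N) borel (\<lambda>(r,x). r + \<gamma> * x)) z = (\<integral>r. cdf N ((z - r) / \<gamma>) \<partial>Rm)"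
    and "real_distribution (distr (Rm \<Otimes>\<^sub>M N) borel (\<lambda>(r,x). r + \<gamma> * x))"
proof -
  interpret R: real_distribution Rm by (rule Rm)
  interpret N: real_distribution N by (rule N)
  interpret RN: pair_prob_space Rm N ..
  have sR[measurable_cong]: "sets Rm = sets borel" and sN[measurable_cong]: "sets N = sets borel" by auto
  have meas[measurable]: "(\<lambda>(r,x). r + \<gamma> * x) \<in> borel_measurable (Rm \<Otimes>\<^sub>M N)" by measurable
  show "real_distribution (distr (Rm \<Otimes>\<^sub>M N) borel (\<lambda>(r,x). r + \<gamma> * x))"
    by (rule RN.real_distribution_distr) simp
  have cm[measurable]: "cdf N \<in> borel_measurable borel" by (rule cdf_mono_measurable[OF N])
  have fm[measurable]: "(\<lambda>r. cdf N ((z - r) / \<gamma>)) \<in> borel_measurable Rm" by measurable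
  have int: "integrable Rm (\<lambda>r. cdf N ((z - r) / \<gamma>))"
    by (rule R.integrable_const_bound[where B=1]) (auto simp: N.cdf_nonneg N.cdf_bounded_prob)
  have X: "(\<lambda>(r,x). r + \<gamma> * x) -` {..z} \<inter> space (Rm \<Otimes>\<^sub>M N) \<in> sets (Rm \<Otimes>\<^sub>M N)" by measurable
  have "emeasure (distr (Rm \<Otimes>\<^sub>M N) borel (\<lambda>(r,x). r + \<gamma> * x)) {..z}
      = emeasure (Rm \<Otimes>\<^sub>M N) ((\<lambda>(r,x). r + \<gamma> * x) -` {..z} \<inter> space (Rm \<Otimes>\<^sub>M N))"
    by (rule emeasure_distr) auto
  also have "\<dots> = (\<integral>\<^sup>+r. emeasure N (Pair r -` ((\<lambda>(r,x). r + \<gamma> * x) -` {..z} \<inter> space (Rm \<Otimes>\<^sub>M N))) \<partial>Rm)"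
    by (rule N.emeasure_pair_measure_alt[OF X])
  also have "\<dots> = (\<integral>\<^sup>+r. ennreal (cdf N ((z - r) / \<gamma>)) \<partial>Rm)"
  proof (rule nn_integral_cong)
    fix r
    have "Pair r -` ((\<lambda>(r,x). r + \<gamma> * x) -` {..z} \<inter> space (Rm \<Otimes>\<^sub>M N)) = {..(z - r) / \<gamma>}"
      using g by (auto simp: space_pair_measure field_simps)
    then show "emeasure N (Pair r -` ((\<lambda>(r,x). r + \<gamma> * x) -` {..z} \<inter> space (Rm \<Otimes>\<^sub>M N))) = ennreal (cdf N ((z - r) / \<gamma>))"
      by (simp add: cdf_def N.emeasure_eq_measure)
  qed
  also have "\<dots> = ennreal (\<integral>r. cdf N ((z - r) / \<gamma>) \<partial>Rm)"
    by (rule nn_integral_eq_integral[OF int]) (auto simp: N.cdf_nonneg)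
  finally show "cdf (distr (Rm \<Otimes>\<^sub>M N) borel (\<lambda>(r,x). r + \<gamma> * x)) z = (\<integral>r. cdf N ((z - r) / \<gamma>) \<partial>Rm)"
    unfolding cdf_def measure_def by (simp add: integral_nonneg_AE N.cdf_nonneg)
qed

lemma sum_w:
  fixes P :: "'s::finite \<Rightarrow> 'a::finite \<Rightarrow> 's pmf" and \<pi> :: "'s \<Rightarrow> 'a pmf"
  shows "(\<Sum>i\<in>UNIV. \<Sum>j\<in>UNIV. pmf (P s a) i * pmf (\<pi> i) j) = 1"
proof -
  have "(\<Sum>i\<in>UNIV. \<Sum>j\<in>UNIV. pmf (P s a) i * pmf (\<pi> i) j) = (\<Sum>i\<in>UNIV. pmf (P s a) i * (\<Sum>j\<in>UNIV. pmf (\<pi> i) j))"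
    by (simp add: sum_distrib_left)
  also have "\<dots> = (\<Sum>i\<in>UNIV. pmf (P s a) i)" by (simp add: sum_pmf_eq_1)
  also have "\<dots> = 1" by (simp add: sum_pmf_eq_1)
  finally show ?thesis .
qed

lemma bellman_dist:
  fixes P :: "'s::finite \<Rightarrow> 'a::finite \<Rightarrow> 's pmf" and \<pi> :: "'s \<Rightarrow> 'a pmf"
  assumes g: "0 < \<gamma>" and R: "\<And>s a. real_distribution (R s a)" and eta: "\<And>s a. real_distribution (\<eta> s a)"
  shows "real_distribution (bellman P \<pi> R \<gamma> \<eta> s a) \<and> cdf (bellman P \<pi> R \<gamma> \<eta> s a) = bellman_cdf P \<pi> R \<gamma> \<eta> s a"
proof -
  define D where "D i j = distr (R s a \<Otimes>\<^sub>M \<eta> i j) borel (\<lambda>(r,x). r + \<gamma> * x)" for i j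
  define w where "w i j = pmf (P s a) i * pmf (\<pi> i) j" for i j
  have D: "real_distribution (D i j)" for i j unfolding D_def by (rule cdf_D(2)[OF R eta g])
  have w0: "0 \<le> w i j" for i j unfolding w_def by simp
  have F: "bellman_cdf P \<pi> R \<gamma> \<eta> s a = (\<lambda>z. \<Sum>i\<in>UNIV. \<Sum>j\<in>UNIV. w i j * cdf (D i j) z)"
    unfolding bellman_cdf_def D_def w_def by (simp add: cdf_D(1)[OF R eta g])
  have mono: "bellman_cdf P \<pi> R \<gamma> \<eta> s a x \<le> bellman_cdf P \<pi> R \<gamma> \<eta> s a y" if "x \<le> y" for x y
    unfolding F using that
    by (intro sum_mono mult_left_mono w0 rd_cdf_mono[OF D])
  have rc: "continuous (at_right x) (bellman_cdf P \<pi> R \<gamma> \<eta> s a)" for x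
    unfolding F by (intro continuous_sum continuous_mult continuous_const rd_cdf_rc[OF D])
  have bot: "(bellman_cdf P \<pi> R \<gamma> \<eta> s a \<longlongrightarrow> 0) at_bot"
  proof -
    have "((\<lambda>z. \<Sum>i\<in>UNIV. \<Sum>j\<in>UNIV. w i j * cdf (D i j) z) \<longlongrightarrow> (\<Sum>i\<in>(UNIV::'s set). \<Sum>j\<in>(UNIV::'a set). w i j * 0)) at_bot"
      by (intro tendsto_sum tendsto_mult tendsto_const rd_cdf_bot[OF D])
    then show ?thesis unfolding F by simp
  qed
  have top: "(bellman_cdf P \<pi> R \<gamma> \<eta> s a \<longlongrightarrow> 1) at_top"
  proof -
    have "((\<lambda>z. \<Sum>i\<in>UNIV. \<Sum>j\<in>UNIV. w i j * cdf (D i j) z) \<longlongrightarrow> (\<Sum>i\<in>(UNIV::'s set). \<Sum>j\<in>(UNIV::'a set). w i j * 1)) at_top"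
      by (intro tendsto_sum tendsto_mult tendsto_const rd_cdf_top[OF D])
    then show ?thesis unfolding F using sum_w[of P s a \<pi>] by (simp add: w_def)
  qed
  show ?thesis unfolding bellman_def
    using real_distribution_interval_measure[OF mono rc bot top] cdf_interval_measure[OF mono rc bot] by blast
qed


lemma layer:
  fixes a b :: real
  shows "(\<integral>\<^sup>+x. (if a \<le> x \<and> x < b then 1 else 0) \<partial>lborel) = ennreal (max 0 (b - a))"
proof -
  have "(\<integral>\<^sup>+x. (if a \<le> x \<and> x < b then 1 else 0) \<partial>lborel) = (\<integral>\<^sup>+x. indicator {a..<b} x \<partial>lborel)"
    by (intro nn_integral_cong) (auto simp: indicator_def)
  also have "\<dots> = emeasure lborel {a..<b}" by simp
  also have "\<dots> = ennreal (max 0 (b - a))"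
    by (cases "a \<le> b") (auto simp: max_def)
  finally show ?thesis .
qed

lemma emeasure_unifm_le:
  assumes "0 \<le> c" "c \<le> 1"
  shows "emeasure unifm {u\<in>space unifm. u \<le> c} = ennreal c"
proof (cases "c < 1")
  case True
  then have "{u\<in>space unifm. u \<le> c} = {0<..c}" by auto
  moreover have "{0<..c} \<subseteq> {0<..<1}" using True by auto
  ultimately show ?thesis using assms by (simp add: emeasure_unifm)
next
  case False
  then have "c = 1" using assms by auto
  moreover have "{u\<in>space unifm. u \<le> (1::real)} = {0<..<1}" by auto
  ultimately show ?thesis by (simp add: emeasure_unifm)
qed

lemma C1gen:
  assumes M1: "real_distribution M1" and M2: "real_distribution M2"
  shows "(\<integral>\<^sup>+u. ennreal (max 0 (quantile M1 u - quantile M2 u - t)) \<partial>unifm)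
       = (\<integral>\<^sup>+x. ennreal (max 0 (cdf M2 (x - t) - cdf M1 x)) \<partial>lborel)"
proof -
  have q1[measurable]: "quantile M1 \<in> borel_measurable unifm" by (rule quantile_measurable[OF M1])
  have q2[measurable]: "quantile M2 \<in> borel_measurable unifm" by (rule quantile_measurable[OF M2])
  interpret pair_sigma_finite unifm lborel ..
  have "(\<integral>\<^sup>+u. ennreal (max 0 (quantile M1 u - quantile M2 u - t)) \<partial>unifm)
      = (\<integral>\<^sup>+u. \<integral>\<^sup>+x. (if quantile M2 u + t \<le> x \<and> x < quantile M1 u then 1 else 0) \<partial>lborel \<partial>unifm)"
    by (intro nn_integral_cong) (simp add: layer algebra_simps)
  also have "\<dots> = (\<integral>\<^sup>+x. \<integral>\<^sup>+u. (if quantile M2 u + t \<le> x \<and> x < quantile M1 u then 1 else 0) \<partial>unifm \<partial>lborel)"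
    by (rule Fubini'[symmetric]) measurable
  also have "\<dots> = (\<integral>\<^sup>+x. ennreal (max 0 (cdf M2 (x - t) - cdf M1 x)) \<partial>lborel)"
  proof (rule nn_integral_cong)
    fix x
    let ?c1 = "cdf M1 x" and ?c2 = "cdf M2 (x - t)"
    have c: "0 \<le> ?c1" "?c1 \<le> 1" "0 \<le> ?c2" "?c2 \<le> 1"
      using M1 M2 by (auto intro: rd_cdf_nonneg rd_cdf_le1)
    have "(\<integral>\<^sup>+u. (if quantile M2 u + t \<le> x \<and> x < quantile M1 u then 1 else 0) \<partial>unifm)
        = (\<integral>\<^sup>+u. indicator ({u\<in>space unifm. u \<le> ?c2} - {u\<in>space unifm. u \<le> ?c1}) u \<partial>unifm)"
    proof (rule nn_integral_cong)
      fix u assume u: "u \<in> space unifm"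
      then have "0 < u" "u < 1" by auto
      then show "(if quantile M2 u + t \<le> x \<and> x < quantile M1 u then 1 else 0)
          = indicator ({u\<in>space unifm. u \<le> ?c2} - {u\<in>space unifm. u \<le> ?c1}) u"
        using u quantile_le_iff[OF M1, of u x] quantile_le_iff[OF M2, of u "x - t"]
        by (auto simp: indicator_def algebra_simps not_le)
    qed
    also have "\<dots> = emeasure unifm ({u\<in>space unifm. u \<le> ?c2} - {u\<in>space unifm. u \<le> ?c1})"
      by (intro nn_integral_indicator) measurable
    also have "\<dots> = ennreal (max 0 (?c2 - ?c1))"
    proof (cases "?c1 \<le> ?c2")
      case True
      have "emeasure unifm ({u\<in>space unifm. u \<le> ?c2} - {u\<in>space unifm. u \<le> ?c1})
          = emeasure unifm {u\<in>space unifm. u \<le> ?c2} - emeasure unifm {u\<in>space unifm. u \<le> ?c1}"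
        using True by (intro emeasure_Diff) (auto simp: UP.emeasure_eq_measure simp del: space_unifm)
      also have "\<dots> = ennreal (?c2 - ?c1)"
        using c emeasure_unifm_le[of ?c2] emeasure_unifm_le[of ?c1] by (simp add: ennreal_minus del: space_unifm)
      finally show ?thesis using True by simp
    next
      case False
      then have e: "{u\<in>space unifm. u \<le> ?c2} - {u\<in>space unifm. u \<le> ?c1} = {}" by auto
      show ?thesis using False by (simp only: e emeasure_empty) (simp add: max_def)
    qed
    finally show "(\<integral>\<^sup>+u. (if quantile M2 u + t \<le> x \<and> x < quantile M1 u then 1 else 0) \<partial>unifm)
        = ennreal (max 0 (?c2 - ?c1))" .
  qed
  finally show ?thesis .
qed


lemma int_cdf:
  assumes Rm: "real_distribution Rm" and N: "real_distribution N"
  shows "ennreal (\<integral>r. cdf N ((z - r) / \<gamma>) \<partial>Rm) = (\<integral>\<^sup>+r. ennreal (cdf N ((z - r) / \<gamma>)) \<partial>Rm)"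
    and "0 \<le> (\<integral>r. cdf N ((z - r) / \<gamma>) \<partial>Rm)"
proof -
  interpret R: real_distribution Rm by (rule Rm)
  have sR[measurable_cong]: "sets Rm = sets borel" by auto
  have cm[measurable]: "cdf N \<in> borel_measurable borel" by (rule cdf_mono_measurable[OF N])
  have fm[measurable]: "(\<lambda>r. cdf N ((z - r) / \<gamma>)) \<in> borel_measurable Rm" by measurable
  have int: "integrable Rm (\<lambda>r. cdf N ((z - r) / \<gamma>))"
    by (rule R.integrable_const_bound[where B=1]) (auto simp: rd_cdf_nonneg[OF N] rd_cdf_le1[OF N])
  show "ennreal (\<integral>r. cdf N ((z - r) / \<gamma>) \<partial>Rm) = (\<integral>\<^sup>+r. ennreal (cdf N ((z - r) / \<gamma>)) \<partial>Rm)"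
    by (rule nn_integral_eq_integral[OF int, symmetric]) (auto simp: rd_cdf_nonneg[OF N])
  show "0 \<le> (\<integral>r. cdf N ((z - r) / \<gamma>) \<partial>Rm)"
    by (rule integral_nonneg_AE) (auto simp: rd_cdf_nonneg[OF N])
qed

definition kk :: "real \<Rightarrow> real \<Rightarrow> real" where
  "kk p t = (if 0 \<le> t then p * (p - 1) * t powr (p - 2) else 0)"

lemma kk_nonneg: "1 < p \<Longrightarrow> 0 \<le> kk p t"
  by (simp add: kk_def)

lemma PD0:
  assumes p: "1 < p" and y: "0 \<le> y"
  shows "(\<integral>\<^sup>+t. ennreal (kk p t) * ennreal (max 0 (y - t)) \<partial>lborel) = ennreal (y powr p)"
proof -
  have h1: "((\<lambda>t. t powr (p - 2)) has_integral (y powr (p - 1) / (p - 1))) {0..y}"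
    using has_integral_powr_from_0[of "p - 2" y] p y by (simp add: algebra_simps)
  have h2: "((\<lambda>t. t powr (p - 1)) has_integral (y powr p / p)) {0..y}"
    using has_integral_powr_from_0[of "p - 1" y] p y by (simp add: algebra_simps)
  have h: "((\<lambda>t. p * (p - 1) * (y * t powr (p - 2) - t powr (p - 1))) has_integral
      (p * (p - 1) * (y * (y powr (p - 1) / (p - 1)) - y powr p / p))) {0..y}"
    by (intro has_integral_mult_right has_integral_diff h2 h1)
  have yy: "y * y powr (p - 1) = y powr p"
    using powr_mult_base[OF y, of "p - 1"] by simp
  have val: "p * (p - 1) * (y * (y powr (p - 1) / (p - 1)) - y powr p / p) = y powr p"
    using p by (simp add: yy field_simps)
  have eqf: "p * (p - 1) * (y * t powr (p - 2) - t powr (p - 1)) = kk p t * max 0 (y - t)"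
    if t: "t \<in> {0..y}" for t
  proof (cases "t = 0")
    case True then show ?thesis by (simp add: kk_def)
  next
    case False
    then have "t * t powr (p - 2) = t powr (p - 1)"
      using powr_mult_base[of t "p - 2"] t by simp
    then show ?thesis using t by (simp add: kk_def algebra_simps max_def)
  qed
  have hh: "((\<lambda>t. kk p t * max 0 (y - t)) has_integral y powr p) {0..y}"
    using h unfolding val by (rule has_integral_eq[rotated]) (rule eqf)
  have "(\<integral>\<^sup>+t. ennreal (kk p t) * ennreal (max 0 (y - t)) \<partial>lborel)
      = (\<integral>\<^sup>+t. ennreal (kk p t * max 0 (y - t)) * indicator {0..y} t \<partial>lborel)"
    using p by (intro nn_integral_cong) (auto simp: indicator_def kk_def ennreal_mult max_def)
  also have "\<dots> = ennreal (y powr p)"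
    by (rule nn_integral_has_integral_lebesgue'[OF _ hh]) (use p in \<open>auto simp: kk_def\<close>)
  finally show ?thesis .
qed

lemma PD:
  assumes p: "1 < p"
  shows "ennreal (\<bar>y\<bar> powr p) = (\<integral>\<^sup>+t. ennreal (kk p t) * ennreal (max 0 (y - t)) + ennreal (kk p t) * ennreal (max 0 (- y - t)) \<partial>lborel)"
proof (cases "0 \<le> y")
  case True
  have "(\<integral>\<^sup>+t. ennreal (kk p t) * ennreal (max 0 (y - t)) + ennreal (kk p t) * ennreal (max 0 (- y - t)) \<partial>lborel)
      = (\<integral>\<^sup>+t. ennreal (kk p t) * ennreal (max 0 (y - t)) \<partial>lborel)"
    using True by (intro nn_integral_cong) (auto simp: kk_def max_def)
  then show ?thesis using PD0[OF p True] True by simp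
next
  case False
  have "(\<integral>\<^sup>+t. ennreal (kk p t) * ennreal (max 0 (y - t)) + ennreal (kk p t) * ennreal (max 0 (- y - t)) \<partial>lborel)
      = (\<integral>\<^sup>+t. ennreal (kk p t) * ennreal (max 0 ((- y) - t)) \<partial>lborel)"
    using False by (intro nn_integral_cong) (auto simp: kk_def max_def)
  then show ?thesis using PD0[OF p, of "- y"] False by simp
qed

lemma LP:
  assumes p: "1 < p" and f[measurable]: "f \<in> borel_measurable unifm"
  shows "(\<integral>\<^sup>+u. ennreal (\<bar>f u\<bar> powr p) \<partial>unifm) =
    (\<integral>\<^sup>+t. ennreal (kk p t) * (\<integral>\<^sup>+u. ennreal (max 0 (f u - t)) \<partial>unifm)
          + ennreal (kk p t) * (\<integral>\<^sup>+u. ennreal (max 0 (- f u - t)) \<partial>unifm) \<partial>lborel)"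
proof -
  interpret P2: pair_sigma_finite unifm lborel ..
  have km[measurable]: "kk p \<in> borel_measurable borel" unfolding kk_def by measurable
  have "(\<integral>\<^sup>+u. ennreal (\<bar>f u\<bar> powr p) \<partial>unifm) =
     (\<integral>\<^sup>+u. \<integral>\<^sup>+t. ennreal (kk p t) * ennreal (max 0 (f u - t)) + ennreal (kk p t) * ennreal (max 0 (- f u - t)) \<partial>lborel \<partial>unifm)"
    by (intro nn_integral_cong PD[OF p])
  also have "\<dots> = (\<integral>\<^sup>+t. \<integral>\<^sup>+u. ennreal (kk p t) * ennreal (max 0 (f u - t)) + ennreal (kk p t) * ennreal (max 0 (- f u - t)) \<partial>unifm \<partial>lborel)"
    by (rule P2.Fubini'[symmetric]) measurable
  also have "\<dots> = (\<integral>\<^sup>+t. ennreal (kk p t) * (\<integral>\<^sup>+u. ennreal (max 0 (f u - t)) \<partial>unifm)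
          + ennreal (kk p t) * (\<integral>\<^sup>+u. ennreal (max 0 (- f u - t)) \<partial>unifm) \<partial>lborel)"
  proof (rule nn_integral_cong)
    fix t
    show "(\<integral>\<^sup>+u. ennreal (kk p t) * ennreal (max 0 (f u - t)) + ennreal (kk p t) * ennreal (max 0 (- f u - t)) \<partial>unifm)
       = ennreal (kk p t) * (\<integral>\<^sup>+u. ennreal (max 0 (f u - t)) \<partial>unifm)
          + ennreal (kk p t) * (\<integral>\<^sup>+u. ennreal (max 0 (- f u - t)) \<partial>unifm)"
      by (subst nn_integral_add) (auto intro!: arg_cong2[where f="(+)"] nn_integral_cmult)
  qed
  finally show ?thesis .
qed

lemma qdistort_prop:
  assumes "qdist_ok \<phi> \<eta>"
  shows "bdist (qdistort \<phi> \<eta> s a) \<and> (\<forall>\<tau>\<in>{0<..<1}. quantile (qdistort \<phi> \<eta> s a) \<tau> = quantile (\<eta> s a) \<tau> - \<phi> s a \<tau>)"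
proof -
  from assms obtain M where "bdist M \<and> (\<forall>\<tau>\<in>{0<..<1}. quantile M \<tau> = quantile (\<eta> s a) \<tau> - \<phi> s a \<tau>)"
    unfolding qdist_ok_def by blast
  then show ?thesis unfolding qdistort_def by (rule someI)
qed

lemma QBND:
  assumes "bdist M"
  shows "\<exists>B. \<forall>u\<in>{0<..<1}. \<bar>quantile M u\<bar> \<le> B"
proof -
  from assms obtain B where M: "real_distribution M" and B: "emeasure M (- {-B..B}) = 0"
    unfolding bdist_def by blast
  interpret real_distribution M by (rule M)
  have m0: "measure M (- {-B..B}) = 0" using B by (simp add: measure_def)
  have "measure M {..B} \<ge> 1"
  proof -
    have "1 = measure M ({..B} \<union> (- {-B..B}))"
    proof -
      have "{..B} \<union> (- {-B..B}) = space M" by auto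
      moreover have "prob (space M) = 1" by (rule prob_space)
      ultimately show ?thesis by simp
    qed
    also have "\<dots> \<le> measure M {..B} + measure M (- {-B..B})"
      by (rule measure_subadditive) (auto simp: emeasure_eq_measure)
    finally show ?thesis using m0 by simp
  qed
  then have cB: "cdf M B = 1" using cdf_bounded_prob[of B] unfolding cdf_def by linarith
  have c0: "cdf M x = 0" if "x < -B" for x
  proof -
    have "measure M {..x} \<le> measure M (- {-B..B})"
      using that by (intro finite_measure_mono) auto
    then show ?thesis using m0 measure_nonneg[of M "{..x}"] unfolding cdf_def by linarith
  qed
  have "\<bar>quantile M u\<bar> \<le> B" if u: "u \<in> {0<..<1}" for u
  proof -
    have "quantile M u \<le> B" using quantile_le_iff[OF M, of u B] u cB by simp
    moreover have "\<not> quantile M u < -B"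
      using quantile_self[OF M, of u] u c0[of "quantile M u"] by auto
    ultimately show ?thesis by auto
  qed
  then show ?thesis by blast
qed

lemma wass_eq:
  assumes M: "real_distribution M" and N: "real_distribution N"
  shows "wass p M N = enn2real (\<integral>\<^sup>+u. ennreal (\<bar>quantile M u - quantile N u\<bar> powr p) \<partial>unifm) powr (1 / p)"
proof -
  have qm[measurable]: "quantile M \<in> borel_measurable unifm" by (rule quantile_measurable[OF M])
  have qn[measurable]: "quantile N \<in> borel_measurable unifm" by (rule quantile_measurable[OF N])
  have h: "(\<lambda>u. \<bar>quantile M u - quantile N u\<bar> powr p) \<in> borel_measurable unifm" by measurable
  have h2: "(\<lambda>u. \<bar>quantile M u - quantile N u\<bar> powr p) \<in> borel_measurable (restrict_space lborel {0<..<1})"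
    using h unfolding unifm_def .
  have hm: "(\<lambda>\<tau>. indicator {0<..<1} \<tau> * \<bar>quantile M \<tau> - quantile N \<tau>\<bar> powr p) \<in> borel_measurable lborel"
    using h2 by (subst (asm) borel_measurable_restrict_space_iff) auto
  have "(\<integral>\<tau>. indicator {0<..<1} \<tau> * \<bar>quantile M \<tau> - quantile N \<tau>\<bar> powr p \<partial>lborel)
      = enn2real (\<integral>\<^sup>+\<tau>. ennreal (indicator {0<..<1} \<tau> * \<bar>quantile M \<tau> - quantile N \<tau>\<bar> powr p) \<partial>lborel)"
    by (rule integral_eq_nn_integral[OF hm]) auto
  also have "(\<integral>\<^sup>+\<tau>. ennreal (indicator {0<..<1} \<tau> * \<bar>quantile M \<tau> - quantile N \<tau>\<bar> powr p) \<partial>lborel)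
      = (\<integral>\<^sup>+u. ennreal (\<bar>quantile M u - quantile N u\<bar> powr p) \<partial>unifm)"
    unfolding unifm_def by (subst nn_integral_restrict_space) (auto intro!: nn_integral_cong simp: indicator_def)
  finally show ?thesis unfolding wass_def by simp
qed

lemma GL:
  assumes M: "real_distribution M" and N: "real_distribution N"
    and c: "\<And>x. cdf N (x - c) \<le> cdf M x" and u: "0 < u" "u < 1"
  shows "quantile M u \<le> quantile N u + c"
proof -
  have "u \<le> cdf N (quantile N u)" by (rule quantile_self[OF N u])
  also have "\<dots> \<le> cdf M (quantile N u + c)" using c[of "quantile N u + c"] by simp
  finally show ?thesis using quantile_le_iff[OF M u] by simp
qed

lemma cdf_map_pmf:
  "cdf (measure_pmf (map_pmf \<theta> K)) = cdf (distr (measure_pmf K) borel \<theta>)"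
proof
  fix x
  show "cdf (measure_pmf (map_pmf \<theta> K)) x = cdf (distr (measure_pmf K) borel \<theta>) x"
  proof -
    have "measure (distr (measure_pmf K) (count_space UNIV) \<theta>) {..x} = measure (measure_pmf K) (\<theta> -` {..x} \<inter> space (measure_pmf K))"
      by (rule measure_distr) auto
    moreover have "measure (distr (measure_pmf K) borel \<theta>) {..x} = measure (measure_pmf K) (\<theta> -` {..x} \<inter> space (measure_pmf K))"
      by (rule measure_distr) auto
    ultimately show ?thesis unfolding cdf_def map_pmf_rep_eq by simp
  qed
qed

lemma PROJ:
  assumes S: "finite S" "S \<noteq> {}" and th: "\<And>k. k \<in> S \<Longrightarrow> \<bar>\<theta> k - \<theta>' k\<bar> \<le> c"
    and u: "0 < u" "u < 1"
  shows "\<bar>quantile (measure_pmf (map_pmf \<theta> (pmf_of_set S))) u - quantile (measure_pmf (map_pmf \<theta>' (pmf_of_set S))) u\<bar> \<le> c"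
proof -
  let ?K = "pmf_of_set S"
  have sK: "set_pmf ?K = S" using S by simp
  have rd: "real_distribution (distr (measure_pmf ?K) borel f)" for f :: "'a \<Rightarrow> real"
    by (rule prob_space.real_distribution_distr) (auto simp: measure_pmf.prob_space_axioms)
  have qeq: "quantile (measure_pmf (map_pmf f ?K)) = quantile (distr (measure_pmf ?K) borel f)" for f :: "'a \<Rightarrow> real"
    unfolding quantile_def[abs_def] cdf_map_pmf ..
  have cdfK: "cdf (distr (measure_pmf ?K) borel f) x = measure ?K {k. f k \<le> x}" for f :: "'a \<Rightarrow> real" and x
    unfolding cdf_def by (subst measure_distr) (auto simp: vimage_def)
  have mono: "cdf (distr (measure_pmf ?K) borel g) (x - c) \<le> cdf (distr (measure_pmf ?K) borel f) x"
    if "\<And>k. k \<in> S \<Longrightarrow> f k \<le> g k + c" for f g :: "'a \<Rightarrow> real" and x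
  proof -
    have "measure ?K {k. g k \<le> x - c} = measure ?K ({k. g k \<le> x - c} \<inter> set_pmf ?K)"
      by (simp add: measure_Int_set_pmf)
    also have "\<dots> \<le> measure ?K {k. f k \<le> x}"
    proof (rule measure_pmf.finite_measure_mono)
      show "{k. g k \<le> x - c} \<inter> set_pmf ?K \<subseteq> {k. f k \<le> x}"
      proof
        fix k assume "k \<in> {k. g k \<le> x - c} \<inter> set_pmf ?K"
        then have "g k \<le> x - c" "k \<in> S" using sK by auto
        then show "k \<in> {k. f k \<le> x}" using that[of k] by simp
      qed
    qed simp
    finally show ?thesis unfolding cdfK .
  qed
  have "quantile (distr (measure_pmf ?K) borel \<theta>) u \<le> quantile (distr (measure_pmf ?K) borel \<theta>') u + c"
    apply (rule GL[OF rd rd _ u])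
    apply (rule mono)
    subgoal for x k using th[of k] by (simp add: abs_le_iff)
    done
  moreover have "quantile (distr (measure_pmf ?K) borel \<theta>') u \<le> quantile (distr (measure_pmf ?K) borel \<theta>) u + c"
    apply (rule GL[OF rd rd _ u])
    apply (rule mono)
    subgoal for x k using th[of k] by (simp add: abs_le_iff)
    done
  ultimately show ?thesis unfolding qeq by (simp add: abs_le_iff)
qed

lemma I_fin:
  assumes M: "bdist M" and N: "bdist N" and p: "1 \<le> p"
  shows "(\<integral>\<^sup>+u. ennreal (\<bar>quantile M u - quantile N u\<bar> powr p) \<partial>unifm) = ennreal (wass p M N powr p)"
proof -
  have Md: "real_distribution M" and Nd: "real_distribution N" using M N by (auto simp: bdist_def)
  obtain B1 where B1: "\<forall>u\<in>{0<..<1}. \<bar>quantile M u\<bar> \<le> B1" using QBND[OF M] by blast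
  obtain B2 where B2: "\<forall>u\<in>{0<..<1}. \<bar>quantile N u\<bar> \<le> B2" using QBND[OF N] by blast
  let ?I = "(\<integral>\<^sup>+u. ennreal (\<bar>quantile M u - quantile N u\<bar> powr p) \<partial>unifm)"
  have "?I \<le> (\<integral>\<^sup>+u. ennreal ((B1 + B2) powr p) \<partial>unifm)"
  proof (rule nn_integral_mono)
    fix u assume "u \<in> space unifm"
    then have "\<bar>quantile M u - quantile N u\<bar> \<le> B1 + B2" using B1 B2 by force
    then show "ennreal (\<bar>quantile M u - quantile N u\<bar> powr p) \<le> ennreal ((B1 + B2) powr p)"
      using p by (intro ennreal_leI powr_mono2) auto
  qed
  also have "\<dots> = ennreal ((B1 + B2) powr p)" using UP.emeasure_space_1 by simp
  finally have fin: "?I < top" by (simp add: order_le_less_trans)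
  have "wass p M N powr p = (enn2real ?I powr (1 / p)) powr p" by (simp add: wass_eq[OF Md Nd])
  also have "\<dots> = enn2real ?I" using p by (simp add: powr_powr powr_one)
  finally show ?thesis using fin by simp
qed

locale mdp =
  fixes P :: "'s::finite \<Rightarrow> 'a::finite \<Rightarrow> 's pmf" and \<pi> :: "'s \<Rightarrow> 'a pmf"
    and R :: "'s \<Rightarrow> 'a \<Rightarrow> real measure" and \<gamma> :: real
  assumes g: "0 < \<gamma>" and Rd: "\<And>s a. real_distribution (R s a)"
begin

definition w :: "'s \<Rightarrow> 'a \<Rightarrow> 's \<Rightarrow> 'a \<Rightarrow> real" where
  "w s a i j = pmf (P s a) i * pmf (\<pi> i) j"

lemma w_nonneg: "0 \<le> w s a i j" by (simp add: w_def)

lemma REP: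
  assumes eta: "\<And>s a. real_distribution (\<eta> s a)"
  shows "ennreal (bellman_cdf P \<pi> R \<gamma> \<eta> s a z) = (\<Sum>i\<in>UNIV. \<Sum>j\<in>UNIV. ennreal (w s a i j) *
     (\<integral>\<^sup>+r. \<integral>\<^sup>+u. (if r + \<gamma> * quantile (\<eta> i j) u \<le> z then 1 else 0) \<partial>unifm \<partial>R s a))"
proof -
  have eq: "ennreal (\<integral>r. cdf (\<eta> i j) ((z - r) / \<gamma>) \<partial>R s a) =
     (\<integral>\<^sup>+r. \<integral>\<^sup>+u. (if r + \<gamma> * quantile (\<eta> i j) u \<le> z then 1 else 0) \<partial>unifm \<partial>R s a)" for i j
  proof -
    have "ennreal (\<integral>r. cdf (\<eta> i j) ((z - r) / \<gamma>) \<partial>R s a) = (\<integral>\<^sup>+r. ennreal (cdf (\<eta> i j) ((z - r) / \<gamma>)) \<partial>R s a)"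
      by (rule int_cdf(1)[OF Rd eta])
    also have "\<dots> = (\<integral>\<^sup>+r. \<integral>\<^sup>+u. (if r + \<gamma> * quantile (\<eta> i j) u \<le> z then 1 else 0) \<partial>unifm \<partial>R s a)"
    proof (rule nn_integral_cong)
      fix r
      have "(\<integral>\<^sup>+u. (if r + \<gamma> * quantile (\<eta> i j) u \<le> z then 1 else 0) \<partial>unifm)
          = (\<integral>\<^sup>+u. (if quantile (\<eta> i j) u \<le> (z - r) / \<gamma> then 1 else 0) \<partial>unifm)"
        using g by (intro nn_integral_cong) (simp add: pos_le_divide_eq algebra_simps)
      then show "ennreal (cdf (\<eta> i j) ((z - r) / \<gamma>)) = (\<integral>\<^sup>+u. (if r + \<gamma> * quantile (\<eta> i j) u \<le> z then 1 else 0) \<partial>unifm)"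
        using nn_integral_unifm_quantile[OF eta] by simp
    qed
    finally show ?thesis .
  qed
  have nn: "0 \<le> w s a i j * (\<integral>r. cdf (\<eta> i j) ((z - r) / \<gamma>) \<partial>R s a)" for i j
    using w_nonneg int_cdf(2)[OF Rd eta] by simp
  have "ennreal (bellman_cdf P \<pi> R \<gamma> \<eta> s a z) =
      ennreal (\<Sum>i\<in>UNIV. \<Sum>j\<in>UNIV. w s a i j * (\<integral>r. cdf (\<eta> i j) ((z - r) / \<gamma>) \<partial>R s a))"
    by (simp add: bellman_cdf_def w_def mult.assoc)
  also have "\<dots> = (\<Sum>i\<in>UNIV. \<Sum>j\<in>UNIV. ennreal (w s a i j * (\<integral>r. cdf (\<eta> i j) ((z - r) / \<gamma>) \<partial>R s a)))"
    using nn by (simp add: sum_nonneg)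
  also have "\<dots> = (\<Sum>i\<in>UNIV. \<Sum>j\<in>UNIV. ennreal (w s a i j) * ennreal (\<integral>r. cdf (\<eta> i j) ((z - r) / \<gamma>) \<partial>R s a))"
    using w_nonneg int_cdf(2)[OF Rd eta] by (simp add: ennreal_mult)
  finally show ?thesis by (simp add: eq)
qed


definition J where
  "J \<eta>1 \<eta>2 s a t x = (\<Sum>i\<in>UNIV. \<Sum>j\<in>UNIV. ennreal (w s a i j) *
     (\<integral>\<^sup>+r. \<integral>\<^sup>+u. (if r + \<gamma> * quantile (\<eta>2 i j) u + t \<le> x \<and> x < r + \<gamma> * quantile (\<eta>1 i j) u then 1 else 0) \<partial>unifm \<partial>R s a))"

lemma C2:
  assumes e1: "\<And>s a. real_distribution (\<eta>1 s a)" and e2: "\<And>s a. real_distribution (\<eta>2 s a)"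
  shows "ennreal (max 0 (bellman_cdf P \<pi> R \<gamma> \<eta>2 s a (x - t) - bellman_cdf P \<pi> R \<gamma> \<eta>1 s a x)) \<le> J \<eta>1 \<eta>2 s a t x"
proof -
  have q1[measurable]: "quantile (\<eta>1 i j) \<in> borel_measurable unifm" for i j by (rule quantile_measurable[OF e1])
  have q2[measurable]: "quantile (\<eta>2 i j) \<in> borel_measurable unifm" for i j by (rule quantile_measurable[OF e2])
  have sR[measurable_cong]: "sets (R s a) = sets borel" using Rd[of s a] by (simp add: real_distribution_def real_distribution_axioms_def)
  let ?f1 = "\<lambda>i j r u. (if r + \<gamma> * quantile (\<eta>1 i j) u \<le> x then 1 else 0) :: ennreal"
  let ?f2 = "\<lambda>i j r u. (if r + \<gamma> * quantile (\<eta>2 i j) u \<le> x - t then 1 else 0) :: ennreal"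
  let ?f3 = "\<lambda>i j r u. (if r + \<gamma> * quantile (\<eta>2 i j) u + t \<le> x \<and> x < r + \<gamma> * quantile (\<eta>1 i j) u then 1 else 0) :: ennreal"
  define F1 where "F1 = bellman_cdf P \<pi> R \<gamma> \<eta>1 s a x"
  define F2 where "F2 = bellman_cdf P \<pi> R \<gamma> \<eta>2 s a (x - t)"
  have bd: "real_distribution (bellman P \<pi> R \<gamma> \<eta>1 s a) \<and> cdf (bellman P \<pi> R \<gamma> \<eta>1 s a) = bellman_cdf P \<pi> R \<gamma> \<eta>1 s a"
    by (rule bellman_dist[OF g Rd e1])
  then have "0 \<le> cdf (bellman P \<pi> R \<gamma> \<eta>1 s a) x" using rd_cdf_nonneg by blast
  with bd have F1nn: "0 \<le> F1" unfolding F1_def by simp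
  have key: "ennreal F2 \<le> ennreal F1 + J \<eta>1 \<eta>2 s a t x"
  proof -
    have "ennreal F2 = (\<Sum>i\<in>UNIV. \<Sum>j\<in>UNIV. ennreal (w s a i j) * (\<integral>\<^sup>+r. \<integral>\<^sup>+u. ?f2 i j r u \<partial>unifm \<partial>R s a))"
      unfolding F2_def by (rule REP[OF e2])
    also have "\<dots> \<le> (\<Sum>i\<in>UNIV. \<Sum>j\<in>UNIV. ennreal (w s a i j) * (\<integral>\<^sup>+r. \<integral>\<^sup>+u. ?f1 i j r u + ?f3 i j r u \<partial>unifm \<partial>R s a))"
      by (intro sum_mono mult_left_mono nn_integral_mono) (auto simp: algebra_simps)
    also have "\<dots> = (\<Sum>i\<in>UNIV. \<Sum>j\<in>UNIV. ennreal (w s a i j) * (\<integral>\<^sup>+r. \<integral>\<^sup>+u. ?f1 i j r u \<partial>unifm \<partial>R s a)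
                     + ennreal (w s a i j) * (\<integral>\<^sup>+r. \<integral>\<^sup>+u. ?f3 i j r u \<partial>unifm \<partial>R s a))"
    proof (intro sum.cong refl)
      fix i j
      have "(\<integral>\<^sup>+r. \<integral>\<^sup>+u. ?f1 i j r u + ?f3 i j r u \<partial>unifm \<partial>R s a)
          = (\<integral>\<^sup>+r. (\<integral>\<^sup>+u. ?f1 i j r u \<partial>unifm) + (\<integral>\<^sup>+u. ?f3 i j r u \<partial>unifm) \<partial>R s a)"
        by (intro nn_integral_cong nn_integral_add) auto
      also have "\<dots> = (\<integral>\<^sup>+r. \<integral>\<^sup>+u. ?f1 i j r u \<partial>unifm \<partial>R s a) + (\<integral>\<^sup>+r. \<integral>\<^sup>+u. ?f3 i j r u \<partial>unifm \<partial>R s a)"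
        by (intro nn_integral_add) auto
      finally show "ennreal (w s a i j) * (\<integral>\<^sup>+r. \<integral>\<^sup>+u. ?f1 i j r u + ?f3 i j r u \<partial>unifm \<partial>R s a)
          = ennreal (w s a i j) * (\<integral>\<^sup>+r. \<integral>\<^sup>+u. ?f1 i j r u \<partial>unifm \<partial>R s a)
                     + ennreal (w s a i j) * (\<integral>\<^sup>+r. \<integral>\<^sup>+u. ?f3 i j r u \<partial>unifm \<partial>R s a)"
        by (simp add: distrib_left)
    qed
    also have "\<dots> = ennreal F1 + J \<eta>1 \<eta>2 s a t x"
      unfolding F1_def J_def REP[OF e1] by (simp add: sum.distrib)
    finally show ?thesis .
  qed
  show ?thesis
  proof (cases "F2 \<le> F1")
    case True
    then show ?thesis unfolding F1_def[symmetric] F2_def[symmetric] by (simp add: max_def)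
  next
    case False
    then have "ennreal (max 0 (F2 - F1)) = ennreal F2 - ennreal F1"
      using F1nn by (simp add: ennreal_minus)
    also have "\<dots> \<le> J \<eta>1 \<eta>2 s a t x"
      using key by (simp add: ennreal_minus_le_iff add.commute)
    finally show ?thesis unfolding F1_def[symmetric] F2_def[symmetric] .
  qed
qed


lemma C3:
  assumes e1: "\<And>s a. real_distribution (\<eta>1 s a)" and e2: "\<And>s a. real_distribution (\<eta>2 s a)"
  shows "(\<integral>\<^sup>+x. J \<eta>1 \<eta>2 s a t x \<partial>lborel) = (\<Sum>i\<in>UNIV. \<Sum>j\<in>UNIV. ennreal (w s a i j) *
     (\<integral>\<^sup>+u. ennreal (max 0 (\<gamma> * (quantile (\<eta>1 i j) u - quantile (\<eta>2 i j) u) - t)) \<partial>unifm))"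
proof -
  have q1[measurable]: "quantile (\<eta>1 i j) \<in> borel_measurable unifm" for i j by (rule quantile_measurable[OF e1])
  have q2[measurable]: "quantile (\<eta>2 i j) \<in> borel_measurable unifm" for i j by (rule quantile_measurable[OF e2])
  have sR[measurable_cong]: "sets (R s a) = sets borel" using Rd[of s a] by (simp add: real_distribution_def real_distribution_axioms_def)
  interpret RP: real_distribution "R s a" by (rule Rd)
  interpret P1: pair_sigma_finite "R s a" lborel ..
  interpret P2: pair_sigma_finite unifm lborel ..
  let ?f = "\<lambda>i j x r u. (if r + \<gamma> * quantile (\<eta>2 i j) u + t \<le> x \<and> x < r + \<gamma> * quantile (\<eta>1 i j) u then 1 else 0) :: ennreal"
  have "(\<integral>\<^sup>+x. J \<eta>1 \<eta>2 s a t x \<partial>lborel) = (\<Sum>i\<in>UNIV. \<integral>\<^sup>+x. (\<Sum>j\<in>UNIV. ennreal (w s a i j) *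
     (\<integral>\<^sup>+r. \<integral>\<^sup>+u. ?f i j x r u \<partial>unifm \<partial>R s a)) \<partial>lborel)"
    unfolding J_def by (rule nn_integral_sum) measurable
  also have "\<dots> = (\<Sum>i\<in>UNIV. \<Sum>j\<in>UNIV. \<integral>\<^sup>+x. ennreal (w s a i j) *
     (\<integral>\<^sup>+r. \<integral>\<^sup>+u. ?f i j x r u \<partial>unifm \<partial>R s a) \<partial>lborel)"
    by (intro sum.cong refl nn_integral_sum) measurable
  also have "\<dots> = (\<Sum>i\<in>UNIV. \<Sum>j\<in>UNIV. ennreal (w s a i j) * \<integral>\<^sup>+x.
     (\<integral>\<^sup>+r. \<integral>\<^sup>+u. ?f i j x r u \<partial>unifm \<partial>R s a) \<partial>lborel)"
    by (intro sum.cong refl nn_integral_cmult) measurable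
  also have "\<dots> = (\<Sum>i\<in>UNIV. \<Sum>j\<in>UNIV. ennreal (w s a i j) *
     (\<integral>\<^sup>+u. ennreal (max 0 (\<gamma> * (quantile (\<eta>1 i j) u - quantile (\<eta>2 i j) u) - t)) \<partial>unifm))"
  proof (intro sum.cong refl arg_cong2[where f="(*)"])
    fix i j
    have "(\<integral>\<^sup>+x. (\<integral>\<^sup>+r. \<integral>\<^sup>+u. ?f i j x r u \<partial>unifm \<partial>R s a) \<partial>lborel)
        = (\<integral>\<^sup>+r. \<integral>\<^sup>+x. \<integral>\<^sup>+u. ?f i j x r u \<partial>unifm \<partial>lborel \<partial>R s a)"
      by (rule P1.Fubini') measurable
    also have "\<dots> = (\<integral>\<^sup>+r. \<integral>\<^sup>+u. \<integral>\<^sup>+x. ?f i j x r u \<partial>lborel \<partial>unifm \<partial>R s a)"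
      by (intro nn_integral_cong P2.Fubini') measurable
    also have "\<dots> = (\<integral>\<^sup>+r. \<integral>\<^sup>+u. ennreal (max 0 (\<gamma> * (quantile (\<eta>1 i j) u - quantile (\<eta>2 i j) u) - t)) \<partial>unifm \<partial>R s a)"
      by (intro nn_integral_cong) (simp add: layer algebra_simps)
    also have "\<dots> = (\<integral>\<^sup>+u. ennreal (max 0 (\<gamma> * (quantile (\<eta>1 i j) u - quantile (\<eta>2 i j) u) - t)) \<partial>unifm)"
      using RP.emeasure_space_1 by simp
    finally show "(\<integral>\<^sup>+x. (\<integral>\<^sup>+r. \<integral>\<^sup>+u. ?f i j x r u \<partial>unifm \<partial>R s a) \<partial>lborel)
        = (\<integral>\<^sup>+u. ennreal (max 0 (\<gamma> * (quantile (\<eta>1 i j) u - quantile (\<eta>2 i j) u) - t)) \<partial>unifm)" .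
  qed
  finally show ?thesis .
qed


lemma KEY:
  assumes e1: "\<And>s a. real_distribution (\<eta>1 s a)" and e2: "\<And>s a. real_distribution (\<eta>2 s a)"
  shows "(\<integral>\<^sup>+u. ennreal (max 0 (quantile (bellman P \<pi> R \<gamma> \<eta>1 s a) u - quantile (bellman P \<pi> R \<gamma> \<eta>2 s a) u - t)) \<partial>unifm)
    \<le> (\<Sum>i\<in>UNIV. \<Sum>j\<in>UNIV. ennreal (w s a i j) *
     (\<integral>\<^sup>+u. ennreal (max 0 (\<gamma> * (quantile (\<eta>1 i j) u - quantile (\<eta>2 i j) u) - t)) \<partial>unifm))"
proof -
  have b1: "real_distribution (bellman P \<pi> R \<gamma> \<eta>1 s a) \<and> cdf (bellman P \<pi> R \<gamma> \<eta>1 s a) = bellman_cdf P \<pi> R \<gamma> \<eta>1 s a"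
    by (rule bellman_dist[OF g Rd e1])
  have b2: "real_distribution (bellman P \<pi> R \<gamma> \<eta>2 s a) \<and> cdf (bellman P \<pi> R \<gamma> \<eta>2 s a) = bellman_cdf P \<pi> R \<gamma> \<eta>2 s a"
    by (rule bellman_dist[OF g Rd e2])
  have "(\<integral>\<^sup>+u. ennreal (max 0 (quantile (bellman P \<pi> R \<gamma> \<eta>1 s a) u - quantile (bellman P \<pi> R \<gamma> \<eta>2 s a) u - t)) \<partial>unifm)
      = (\<integral>\<^sup>+x. ennreal (max 0 (bellman_cdf P \<pi> R \<gamma> \<eta>2 s a (x - t) - bellman_cdf P \<pi> R \<gamma> \<eta>1 s a x)) \<partial>lborel)"
    using C1gen[of "bellman P \<pi> R \<gamma> \<eta>1 s a" "bellman P \<pi> R \<gamma> \<eta>2 s a" t] b1 b2 by simp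
  also have "\<dots> \<le> (\<integral>\<^sup>+x. J \<eta>1 \<eta>2 s a t x \<partial>lborel)"
    by (intro nn_integral_mono C2[OF e1 e2])
  also have "\<dots> = (\<Sum>i\<in>UNIV. \<Sum>j\<in>UNIV. ennreal (w s a i j) *
     (\<integral>\<^sup>+u. ennreal (max 0 (\<gamma> * (quantile (\<eta>1 i j) u - quantile (\<eta>2 i j) u) - t)) \<partial>unifm))"
    by (rule C3[OF e1 e2])
  finally show ?thesis .
qed

lemma MP:
  assumes e1: "\<And>s a. real_distribution (\<eta>1 s a)" and e2: "\<And>s a. real_distribution (\<eta>2 s a)"
    and p: "1 \<le> p"
  shows "(\<integral>\<^sup>+u. ennreal (\<bar>quantile (bellman P \<pi> R \<gamma> \<eta>1 s a) u - quantile (bellman P \<pi> R \<gamma> \<eta>2 s a) u\<bar> powr p) \<partial>unifm)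
    \<le> (\<Sum>i\<in>UNIV. \<Sum>j\<in>UNIV. ennreal (w s a i j) *
     (\<integral>\<^sup>+u. ennreal (\<bar>\<gamma> * (quantile (\<eta>1 i j) u - quantile (\<eta>2 i j) u)\<bar> powr p) \<partial>unifm))"
proof -
  have b1x: "real_distribution (bellman P \<pi> R \<gamma> \<eta>1 s a) \<and> cdf (bellman P \<pi> R \<gamma> \<eta>1 s a) = bellman_cdf P \<pi> R \<gamma> \<eta>1 s a"
    by (rule bellman_dist[OF g Rd e1])
  then have b1: "real_distribution (bellman P \<pi> R \<gamma> \<eta>1 s a)" by blast
  have b2x: "real_distribution (bellman P \<pi> R \<gamma> \<eta>2 s a) \<and> cdf (bellman P \<pi> R \<gamma> \<eta>2 s a) = bellman_cdf P \<pi> R \<gamma> \<eta>2 s a"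
    by (rule bellman_dist[OF g Rd e2])
  then have b2: "real_distribution (bellman P \<pi> R \<gamma> \<eta>2 s a)" by blast
  have qa1[measurable]: "quantile (bellman P \<pi> R \<gamma> \<eta>1 s a) \<in> borel_measurable unifm" by (rule quantile_measurable[OF b1])
  have qa2[measurable]: "quantile (bellman P \<pi> R \<gamma> \<eta>2 s a) \<in> borel_measurable unifm" by (rule quantile_measurable[OF b2])
  have q1[measurable]: "quantile (\<eta>1 i j) \<in> borel_measurable unifm" for i j by (rule quantile_measurable[OF e1])
  have q2[measurable]: "quantile (\<eta>2 i j) \<in> borel_measurable unifm" for i j by (rule quantile_measurable[OF e2])
  define dA where "dA u = quantile (bellman P \<pi> R \<gamma> \<eta>1 s a) u - quantile (bellman P \<pi> R \<gamma> \<eta>2 s a) u" for u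
  define d where "d i j u = \<gamma> * (quantile (\<eta>1 i j) u - quantile (\<eta>2 i j) u)" for i j u
  have dAm[measurable]: "dA \<in> borel_measurable unifm" unfolding dA_def by measurable
  have dm[measurable]: "d i j \<in> borel_measurable unifm" for i j unfolding d_def by measurable
  have K1: "(\<integral>\<^sup>+u. ennreal (max 0 (dA u - t)) \<partial>unifm) \<le> (\<Sum>i\<in>UNIV. \<Sum>j\<in>UNIV. ennreal (w s a i j) *
     (\<integral>\<^sup>+u. ennreal (max 0 (d i j u - t)) \<partial>unifm))" for t
    using KEY[OF e1 e2, where s=s and a=a and t=t] unfolding dA_def d_def .
  have K2: "(\<integral>\<^sup>+u. ennreal (max 0 (- dA u - t)) \<partial>unifm) \<le> (\<Sum>i\<in>UNIV. \<Sum>j\<in>UNIV. ennreal (w s a i j) *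
     (\<integral>\<^sup>+u. ennreal (max 0 (- d i j u - t)) \<partial>unifm))" for t
  proof -
    have "(\<integral>\<^sup>+u. ennreal (max 0 (- dA u - t)) \<partial>unifm) = (\<integral>\<^sup>+u. ennreal (max 0 (quantile (bellman P \<pi> R \<gamma> \<eta>2 s a) u - quantile (bellman P \<pi> R \<gamma> \<eta>1 s a) u - t)) \<partial>unifm)"
      unfolding dA_def by (intro nn_integral_cong) (simp add: algebra_simps)
    also have "\<dots> \<le> (\<Sum>i\<in>UNIV. \<Sum>j\<in>UNIV. ennreal (w s a i j) *
     (\<integral>\<^sup>+u. ennreal (max 0 (\<gamma> * (quantile (\<eta>2 i j) u - quantile (\<eta>1 i j) u) - t)) \<partial>unifm))"
      by (rule KEY[OF e2 e1])
    also have "\<dots> = (\<Sum>i\<in>UNIV. \<Sum>j\<in>UNIV. ennreal (w s a i j) *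
     (\<integral>\<^sup>+u. ennreal (max 0 (- d i j u - t)) \<partial>unifm))"
      unfolding d_def by (intro sum.cong refl arg_cong2[where f="(*)"] nn_integral_cong) (simp add: algebra_simps)
    finally show ?thesis .
  qed
  show ?thesis
  proof (cases "p = 1")
    case True
    have "(\<integral>\<^sup>+u. ennreal (\<bar>dA u\<bar> powr p) \<partial>unifm) = (\<integral>\<^sup>+u. ennreal (max 0 (dA u - 0)) + ennreal (max 0 (- dA u - 0)) \<partial>unifm)"
      using True by (intro nn_integral_cong) (auto simp: max_def abs_if)
    also have "\<dots> = (\<integral>\<^sup>+u. ennreal (max 0 (dA u - 0)) \<partial>unifm) + (\<integral>\<^sup>+u. ennreal (max 0 (- dA u - 0)) \<partial>unifm)"
      by (rule nn_integral_add) auto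
    also have "\<dots> \<le> (\<Sum>i\<in>UNIV. \<Sum>j\<in>UNIV. ennreal (w s a i j) * (\<integral>\<^sup>+u. ennreal (max 0 (d i j u - 0)) \<partial>unifm))
        + (\<Sum>i\<in>UNIV. \<Sum>j\<in>UNIV. ennreal (w s a i j) * (\<integral>\<^sup>+u. ennreal (max 0 (- d i j u - 0)) \<partial>unifm))"
      by (intro add_mono K1 K2)
    also have "\<dots> = (\<Sum>i\<in>UNIV. \<Sum>j\<in>UNIV. ennreal (w s a i j) * (\<integral>\<^sup>+u. ennreal (\<bar>d i j u\<bar> powr p) \<partial>unifm))"
    proof -
      have "(\<integral>\<^sup>+u. ennreal (\<bar>d i j u\<bar> powr p) \<partial>unifm) = (\<integral>\<^sup>+u. ennreal (max 0 (d i j u - 0)) \<partial>unifm) + (\<integral>\<^sup>+u. ennreal (max 0 (- d i j u - 0)) \<partial>unifm)" for i j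
      proof -
        have "(\<integral>\<^sup>+u. ennreal (\<bar>d i j u\<bar> powr p) \<partial>unifm) = (\<integral>\<^sup>+u. ennreal (max 0 (d i j u - 0)) + ennreal (max 0 (- d i j u - 0)) \<partial>unifm)"
          using True by (intro nn_integral_cong) (auto simp: max_def abs_if)
        also have "\<dots> = (\<integral>\<^sup>+u. ennreal (max 0 (d i j u - 0)) \<partial>unifm) + (\<integral>\<^sup>+u. ennreal (max 0 (- d i j u - 0)) \<partial>unifm)"
          by (rule nn_integral_add) auto
        finally show ?thesis .
      qed
      then show ?thesis by (simp add: sum.distrib[symmetric] distrib_left)
    qed
    finally show ?thesis unfolding dA_def d_def .
  next
    case False
    then have p1: "1 < p" using p by simp
    have km[measurable]: "kk p \<in> borel_measurable borel" unfolding kk_def by measurable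
    let ?B1 = "\<lambda>i j t. (\<integral>\<^sup>+u. ennreal (max 0 (d i j u - t)) \<partial>unifm)"
    let ?B2 = "\<lambda>i j t. (\<integral>\<^sup>+u. ennreal (max 0 (- d i j u - t)) \<partial>unifm)"
    have "(\<integral>\<^sup>+u. ennreal (\<bar>dA u\<bar> powr p) \<partial>unifm) =
      (\<integral>\<^sup>+t. ennreal (kk p t) * (\<integral>\<^sup>+u. ennreal (max 0 (dA u - t)) \<partial>unifm)
          + ennreal (kk p t) * (\<integral>\<^sup>+u. ennreal (max 0 (- dA u - t)) \<partial>unifm) \<partial>lborel)"
      by (rule LP[OF p1 dAm])
    also have "\<dots> \<le> (\<integral>\<^sup>+t. (\<Sum>i\<in>UNIV. \<Sum>j\<in>UNIV. ennreal (w s a i j) *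
         (ennreal (kk p t) * ?B1 i j t + ennreal (kk p t) * ?B2 i j t)) \<partial>lborel)"
    proof (rule nn_integral_mono)
      fix t
      have "ennreal (kk p t) * (\<integral>\<^sup>+u. ennreal (max 0 (dA u - t)) \<partial>unifm)
          + ennreal (kk p t) * (\<integral>\<^sup>+u. ennreal (max 0 (- dA u - t)) \<partial>unifm)
         \<le> ennreal (kk p t) * (\<Sum>i\<in>UNIV. \<Sum>j\<in>UNIV. ennreal (w s a i j) * ?B1 i j t)
          + ennreal (kk p t) * (\<Sum>i\<in>UNIV. \<Sum>j\<in>UNIV. ennreal (w s a i j) * ?B2 i j t)"
        by (intro add_mono mult_left_mono K1 K2) auto
      also have "\<dots> = (\<Sum>i\<in>UNIV. \<Sum>j\<in>UNIV. ennreal (w s a i j) *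
         (ennreal (kk p t) * ?B1 i j t + ennreal (kk p t) * ?B2 i j t))"
        by (simp add: sum_distrib_left sum.distrib[symmetric] algebra_simps)
      finally show "ennreal (kk p t) * (\<integral>\<^sup>+u. ennreal (max 0 (dA u - t)) \<partial>unifm)
          + ennreal (kk p t) * (\<integral>\<^sup>+u. ennreal (max 0 (- dA u - t)) \<partial>unifm)
         \<le> (\<Sum>i\<in>UNIV. \<Sum>j\<in>UNIV. ennreal (w s a i j) *
         (ennreal (kk p t) * ?B1 i j t + ennreal (kk p t) * ?B2 i j t))" .
    qed
    also have "\<dots> = (\<Sum>i\<in>UNIV. \<Sum>j\<in>UNIV. ennreal (w s a i j) *
         (\<integral>\<^sup>+t. ennreal (kk p t) * ?B1 i j t + ennreal (kk p t) * ?B2 i j t \<partial>lborel))"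
      apply (subst nn_integral_sum, measurable)
      apply (intro sum.cong refl)
      apply (subst nn_integral_sum, measurable)
      apply (intro sum.cong refl)
      apply (rule nn_integral_cmult, measurable)
      done
    also have "\<dots> = (\<Sum>i\<in>UNIV. \<Sum>j\<in>UNIV. ennreal (w s a i j) * (\<integral>\<^sup>+u. ennreal (\<bar>d i j u\<bar> powr p) \<partial>unifm))"
      by (simp add: LP[OF p1 dm])
    finally show ?thesis unfolding dA_def d_def .
  qed
qed


lemma part1_sa:
  assumes mu: "\<And>s a. bdist (\<mu> s a)" and nu: "\<And>s a. bdist (\<nu> s a)" and p: "1 \<le> p"
    and c: "\<And>i j. wass p (\<mu> i j) (\<nu> i j) \<le> c"
  shows "wass p (bellman P \<pi> R \<gamma> \<mu> s a) (bellman P \<pi> R \<gamma> \<nu> s a) \<le> \<gamma> * c"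
proof -
  have mud: "\<And>s a. real_distribution (\<mu> s a)" and nud: "\<And>s a. real_distribution (\<nu> s a)"
    using mu nu by (auto simp: bdist_def)
  have bAx: "real_distribution (bellman P \<pi> R \<gamma> \<mu> s a) \<and> cdf (bellman P \<pi> R \<gamma> \<mu> s a) = bellman_cdf P \<pi> R \<gamma> \<mu> s a"
    by (rule bellman_dist[OF g Rd mud])
  then have bA: "real_distribution (bellman P \<pi> R \<gamma> \<mu> s a)" by blast
  have bBx: "real_distribution (bellman P \<pi> R \<gamma> \<nu> s a) \<and> cdf (bellman P \<pi> R \<gamma> \<nu> s a) = bellman_cdf P \<pi> R \<gamma> \<nu> s a"
    by (rule bellman_dist[OF g Rd nud])
  then have bB: "real_distribution (bellman P \<pi> R \<gamma> \<nu> s a)" by blast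
  have wnn: "0 \<le> wass p M N" for M N unfolding wass_def by simp
  have c0: "0 \<le> c" using c[of undefined undefined] wnn[of "\<mu> undefined undefined" "\<nu> undefined undefined"] by linarith
  let ?I = "\<lambda>M N. (\<integral>\<^sup>+u. ennreal (\<bar>quantile M u - quantile N u\<bar> powr p) \<partial>unifm)"
  have qm[measurable]: "quantile (\<mu> i j) \<in> borel_measurable unifm" "quantile (\<nu> i j) \<in> borel_measurable unifm" for i j
    using quantile_measurable[OF mud] quantile_measurable[OF nud] by auto
  have "?I (bellman P \<pi> R \<gamma> \<mu> s a) (bellman P \<pi> R \<gamma> \<nu> s a)
     \<le> (\<Sum>i\<in>UNIV. \<Sum>j\<in>UNIV. ennreal (w s a i j) *
     (\<integral>\<^sup>+u. ennreal (\<bar>\<gamma> * (quantile (\<mu> i j) u - quantile (\<nu> i j) u)\<bar> powr p) \<partial>unifm))"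
    by (rule MP[OF mud nud p])
  also have "\<dots> = (\<Sum>i\<in>UNIV. \<Sum>j\<in>UNIV. ennreal (w s a i j) * (ennreal (\<gamma> powr p) * ?I (\<mu> i j) (\<nu> i j)))"
  proof (intro sum.cong refl arg_cong2[where f="(*)"])
    fix i j
    have "(\<integral>\<^sup>+u. ennreal (\<bar>\<gamma> * (quantile (\<mu> i j) u - quantile (\<nu> i j) u)\<bar> powr p) \<partial>unifm)
        = (\<integral>\<^sup>+u. ennreal (\<gamma> powr p) * ennreal (\<bar>quantile (\<mu> i j) u - quantile (\<nu> i j) u\<bar> powr p) \<partial>unifm)"
      using g by (intro nn_integral_cong) (simp add: abs_mult powr_mult ennreal_mult)
    also have "\<dots> = ennreal (\<gamma> powr p) * ?I (\<mu> i j) (\<nu> i j)"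
      by (rule nn_integral_cmult) measurable
    finally show "(\<integral>\<^sup>+u. ennreal (\<bar>\<gamma> * (quantile (\<mu> i j) u - quantile (\<nu> i j) u)\<bar> powr p) \<partial>unifm)
        = ennreal (\<gamma> powr p) * ?I (\<mu> i j) (\<nu> i j)" .
  qed
  also have "\<dots> \<le> (\<Sum>i\<in>UNIV. \<Sum>j\<in>UNIV. ennreal (w s a i j) * (ennreal (\<gamma> powr p) * ennreal (c powr p)))"
  proof (intro sum_mono mult_left_mono)
    fix i j
    have "?I (\<mu> i j) (\<nu> i j) = ennreal (wass p (\<mu> i j) (\<nu> i j) powr p)" by (rule I_fin[OF mu nu p])
    also have "\<dots> \<le> ennreal (c powr p)"
      using p c[of i j] wnn by (intro ennreal_leI powr_mono2) auto
    finally show "?I (\<mu> i j) (\<nu> i j) \<le> ennreal (c powr p)" .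
  qed auto
  also have "\<dots> = ennreal (\<gamma> powr p * c powr p) * (\<Sum>i\<in>UNIV. \<Sum>j\<in>UNIV. ennreal (w s a i j))"
    by (simp add: sum_distrib_left ennreal_mult algebra_simps)
  also have "(\<Sum>i\<in>UNIV. \<Sum>j\<in>UNIV. ennreal (w s a i j)) = 1"
  proof -
    have "(\<Sum>i\<in>UNIV. \<Sum>j\<in>UNIV. ennreal (w s a i j)) = ennreal (\<Sum>i\<in>UNIV. \<Sum>j\<in>UNIV. w s a i j)"
      by (simp add: w_nonneg sum_nonneg)
    also have "\<dots> = 1" using sum_w[of P s a \<pi>] by (simp add: w_def)
    finally show ?thesis .
  qed
  finally have I: "?I (bellman P \<pi> R \<gamma> \<mu> s a) (bellman P \<pi> R \<gamma> \<nu> s a) \<le> ennreal (\<gamma> powr p * c powr p)" by simp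
  have "enn2real (?I (bellman P \<pi> R \<gamma> \<mu> s a) (bellman P \<pi> R \<gamma> \<nu> s a)) \<le> \<gamma> powr p * c powr p"
    by (rule enn2real_leI[OF _ I]) simp
  then have "enn2real (?I (bellman P \<pi> R \<gamma> \<mu> s a) (bellman P \<pi> R \<gamma> \<nu> s a)) powr (1 / p) \<le> (\<gamma> powr p * c powr p) powr (1 / p)"
    using p by (intro powr_mono2) auto
  also have "(\<gamma> powr p * c powr p) powr (1 / p) = \<gamma> * c"
  proof -
    have "(\<gamma> powr p * c powr p) powr (1 / p) = ((\<gamma> * c) powr p) powr (1 / p)" by (simp add: powr_mult)
    also have "\<dots> = \<gamma> * c" using p g c0 by (simp add: powr_powr powr_one)
    finally show ?thesis .
  qed
  finally show ?thesis by (simp add: wass_eq[OF bA bB])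
qed

lemma part2_sa:
  assumes mud: "\<And>s a. real_distribution (\<mu> s a)" and nud: "\<And>s a. real_distribution (\<nu> s a)"
    and c: "\<And>i j u. u \<in> {0<..<1} \<Longrightarrow> \<bar>quantile (\<mu> i j) u - quantile (\<nu> i j) u\<bar> \<le> c"
    and u: "0 < u" "u < 1"
  shows "\<bar>quantile (bellman P \<pi> R \<gamma> \<mu> s a) u - quantile (bellman P \<pi> R \<gamma> \<nu> s a) u\<bar> \<le> \<gamma> * c"
proof -
  have gen: "quantile (bellman P \<pi> R \<gamma> \<eta>1 s a) u \<le> quantile (bellman P \<pi> R \<gamma> \<eta>2 s a) u + \<gamma> * c"
    if e1: "\<And>s a. real_distribution (\<eta>1 s a)" and e2: "\<And>s a. real_distribution (\<eta>2 s a)"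
      and c12: "\<And>i j u. u \<in> {0<..<1} \<Longrightarrow> quantile (\<eta>1 i j) u \<le> quantile (\<eta>2 i j) u + c" for \<eta>1 \<eta>2
  proof -
    have b1: "real_distribution (bellman P \<pi> R \<gamma> \<eta>1 s a) \<and> cdf (bellman P \<pi> R \<gamma> \<eta>1 s a) = bellman_cdf P \<pi> R \<gamma> \<eta>1 s a"
      by (rule bellman_dist[OF g Rd e1])
    have b2: "real_distribution (bellman P \<pi> R \<gamma> \<eta>2 s a) \<and> cdf (bellman P \<pi> R \<gamma> \<eta>2 s a) = bellman_cdf P \<pi> R \<gamma> \<eta>2 s a"
      by (rule bellman_dist[OF g Rd e2])
    have J0: "J \<eta>1 \<eta>2 s a (\<gamma> * c) x = 0" for x
    proof -
      have "(\<integral>\<^sup>+u. (if r + \<gamma> * quantile (\<eta>2 i j) u + \<gamma> * c \<le> x \<and> x < r + \<gamma> * quantile (\<eta>1 i j) u then 1 else 0) \<partial>unifm) = 0"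
        for i j r
      proof -
        have "(\<integral>\<^sup>+u. (if r + \<gamma> * quantile (\<eta>2 i j) u + \<gamma> * c \<le> x \<and> x < r + \<gamma> * quantile (\<eta>1 i j) u then 1 else 0) \<partial>unifm)
            = (\<integral>\<^sup>+u. 0 \<partial>unifm)"
        proof (rule nn_integral_cong)
          fix u assume "u \<in> space unifm"
          then have "quantile (\<eta>1 i j) u \<le> quantile (\<eta>2 i j) u + c" using c12 by simp
          then have "\<gamma> * quantile (\<eta>1 i j) u \<le> \<gamma> * quantile (\<eta>2 i j) u + \<gamma> * c"
            using g by (metis distrib_left mult_left_mono less_imp_le)
          then show "(if r + \<gamma> * quantile (\<eta>2 i j) u + \<gamma> * c \<le> x \<and> x < r + \<gamma> * quantile (\<eta>1 i j) u then 1 else 0) = (0::ennreal)"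
            by auto
        qed
        then show ?thesis by simp
      qed
      then show ?thesis unfolding J_def by simp
    qed
    have "cdf (bellman P \<pi> R \<gamma> \<eta>2 s a) (x - \<gamma> * c) \<le> cdf (bellman P \<pi> R \<gamma> \<eta>1 s a) x" for x
    proof -
      have "ennreal (max 0 (bellman_cdf P \<pi> R \<gamma> \<eta>2 s a (x - \<gamma> * c) - bellman_cdf P \<pi> R \<gamma> \<eta>1 s a x)) \<le> J \<eta>1 \<eta>2 s a (\<gamma> * c) x"
        by (rule C2) (auto intro: e1 e2)
      then have "ennreal (max 0 (bellman_cdf P \<pi> R \<gamma> \<eta>2 s a (x - \<gamma> * c) - bellman_cdf P \<pi> R \<gamma> \<eta>1 s a x)) \<le> 0"
        using J0[of x] by simp
      then show ?thesis using b1 b2 by (simp add: ennreal_eq_0_iff)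
    qed
    then show ?thesis using GL[of "bellman P \<pi> R \<gamma> \<eta>1 s a" "bellman P \<pi> R \<gamma> \<eta>2 s a" "\<gamma> * c" u] b1 b2 u by blast
  qed
  have "quantile (bellman P \<pi> R \<gamma> \<mu> s a) u \<le> quantile (bellman P \<pi> R \<gamma> \<nu> s a) u + \<gamma> * c"
  proof (rule gen[OF mud nud])
    fix i j u assume "u \<in> {0<..<1::real}"
    from c[OF this, of i j] show "quantile (\<mu> i j) u \<le> quantile (\<nu> i j) u + c" by (simp add: abs_le_iff)
  qed
  moreover have "quantile (bellman P \<pi> R \<gamma> \<nu> s a) u \<le> quantile (bellman P \<pi> R \<gamma> \<mu> s a) u + \<gamma> * c"
  proof (rule gen[OF nud mud])
    fix i j u assume "u \<in> {0<..<1::real}"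
    from c[OF this, of i j] show "quantile (\<nu> i j) u \<le> quantile (\<mu> i j) u + c" by (simp add: abs_le_iff)
  qed
  ultimately show ?thesis by (simp add: abs_le_iff)
qed

end


lemma tau_mono:
  fixes \<tau> :: "nat \<Rightarrow> real"
  assumes inc: "\<And>k. k < m \<Longrightarrow> \<tau> k < \<tau> (Suc k)"
  shows "i \<le> j \<Longrightarrow> j \<le> m \<Longrightarrow> \<tau> i \<le> \<tau> j"
proof (induction j)
  case 0
  then show ?case by simp
next
  case (Suc j)
  show ?case
  proof (cases "i = Suc j")
    case True then show ?thesis by simp
  next
    case False
    then have "\<tau> i \<le> \<tau> j" using Suc by simp
    also have "\<tau> j < \<tau> (Suc j)" using inc Suc by simp
    finally show ?thesis by simp
  qed
qed

theorem proposition1: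
  fixes P :: "'s::finite \<Rightarrow> 'a::finite \<Rightarrow> 's pmf"
    and \<pi> :: "'s \<Rightarrow> 'a pmf"
    and R :: "'s \<Rightarrow> 'a \<Rightarrow> real measure"
    and \<gamma> p :: real
    and \<phi> :: "'s \<Rightarrow> 'a \<Rightarrow> real \<Rightarrow> real"
    and \<mu> \<nu> :: "'s \<Rightarrow> 'a \<Rightarrow> real measure"
    and m :: nat and \<tau> :: "nat \<Rightarrow> real"
  assumes "0 < \<gamma>" "\<gamma> < 1"
    and "\<And>s a. bdist (R s a)"
    and "\<And>s a. bdist (\<mu> s a)" "\<And>s a. bdist (\<nu> s a)"
    and "qdist_ok \<phi> (bellman P \<pi> R \<gamma> \<mu>)" "qdist_ok \<phi> (bellman P \<pi> R \<gamma> \<nu>)"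
    and "1 \<le> p"
    and "1 \<le> m" "\<tau> 0 = 0" "\<tau> m = 1" "\<And>k. k < m \<Longrightarrow> \<tau> k < \<tau> (Suc k)"
  shows "bar_wass p (qdistort \<phi> (bellman P \<pi> R \<gamma> \<mu>)) (qdistort \<phi> (bellman P \<pi> R \<gamma> \<nu>))
           \<le> \<gamma> * bar_wass p \<mu> \<nu> \<and>
         bar_wass_inf (qproj m \<tau> (qdistort \<phi> (bellman P \<pi> R \<gamma> \<mu>)))
                      (qproj m \<tau> (qdistort \<phi> (bellman P \<pi> R \<gamma> \<nu>)))
           \<le> \<gamma> * bar_wass_inf \<mu> \<nu>"
proof -
  note g = assms(1) and mub = assms(4) and nub = assms(5) and p = assms(8)
  have Rd: "\<And>s a. real_distribution (R s a)" using assms(3) unfolding bdist_def by blast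
  have mud: "\<And>s a. real_distribution (\<mu> s a)" using mub unfolding bdist_def by blast
  have nud: "\<And>s a. real_distribution (\<nu> s a)" using nub unfolding bdist_def by blast
  interpret mdp P \<pi> R \<gamma> by (rule mdp.intro[OF g Rd])
  have bA: "real_distribution (bellman P \<pi> R \<gamma> \<mu> s a)" for s a
  proof -
    have "real_distribution (bellman P \<pi> R \<gamma> \<mu> s a) \<and> cdf (bellman P \<pi> R \<gamma> \<mu> s a) = bellman_cdf P \<pi> R \<gamma> \<mu> s a"
      by (rule bellman_dist[OF g Rd mud])
    then show ?thesis by blast
  qed
  have bB: "real_distribution (bellman P \<pi> R \<gamma> \<nu> s a)" for s a
  proof -
    have "real_distribution (bellman P \<pi> R \<gamma> \<nu> s a) \<and> cdf (bellman P \<pi> R \<gamma> \<nu> s a) = bellman_cdf P \<pi> R \<gamma> \<nu> s a"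
      by (rule bellman_dist[OF g Rd nud])
    then show ?thesis by blast
  qed
  have QA: "quantile (qdistort \<phi> (bellman P \<pi> R \<gamma> \<mu>) s a) t = quantile (bellman P \<pi> R \<gamma> \<mu> s a) t - \<phi> s a t"
    if "t \<in> {0<..<1}" for s a t using qdistort_prop[OF assms(6), of s a] that by blast
  have QB: "quantile (qdistort \<phi> (bellman P \<pi> R \<gamma> \<nu>) s a) t = quantile (bellman P \<pi> R \<gamma> \<nu> s a) t - \<phi> s a t"
    if "t \<in> {0<..<1}" for s a t using qdistort_prop[OF assms(7), of s a] that by blast
  have fin: "bdd_above (f ` (UNIV :: ('s \<times> 'a) set))" for f :: "'s \<times> 'a \<Rightarrow> real"
    by (rule bdd_above_finite) simp

  define c where "c = bar_wass p \<mu> \<nu>"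
  have cij: "wass p (\<mu> i j) (\<nu> i j) \<le> c" for i j
  proof -
    have "(\<lambda>sa. wass p (\<mu> (fst sa) (snd sa)) (\<nu> (fst sa) (snd sa))) (i, j)
        \<le> (SUP sa\<in>UNIV. wass p (\<mu> (fst sa) (snd sa)) (\<nu> (fst sa) (snd sa)))"
      by (rule cSUP_upper[OF _ fin]) simp
    then show ?thesis unfolding c_def bar_wass_def by simp
  qed
  have P1: "wass p (qdistort \<phi> (bellman P \<pi> R \<gamma> \<mu>) s a) (qdistort \<phi> (bellman P \<pi> R \<gamma> \<nu>) s a) \<le> \<gamma> * c" for s a
  proof -
    have "(\<lambda>t. indicator {0<..<1} t * \<bar>quantile (qdistort \<phi> (bellman P \<pi> R \<gamma> \<mu>) s a) t - quantile (qdistort \<phi> (bellman P \<pi> R \<gamma> \<nu>) s a) t\<bar> powr p)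
        = (\<lambda>t. indicator {0<..<1} t * \<bar>quantile (bellman P \<pi> R \<gamma> \<mu> s a) t - quantile (bellman P \<pi> R \<gamma> \<nu> s a) t\<bar> powr p)"
      by (rule ext) (auto simp: indicator_def QA QB)
    then have "wass p (qdistort \<phi> (bellman P \<pi> R \<gamma> \<mu>) s a) (qdistort \<phi> (bellman P \<pi> R \<gamma> \<nu>) s a)
        = wass p (bellman P \<pi> R \<gamma> \<mu> s a) (bellman P \<pi> R \<gamma> \<nu> s a)"
      unfolding wass_def by simp
    also have "\<dots> \<le> \<gamma> * c" by (rule part1_sa[OF mub nub p cij])
    finally show ?thesis .
  qed
  have part1: "bar_wass p (qdistort \<phi> (bellman P \<pi> R \<gamma> \<mu>)) (qdistort \<phi> (bellman P \<pi> R \<gamma> \<nu>)) \<le> \<gamma> * bar_wass p \<mu> \<nu>"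
    unfolding bar_wass_def[of p "qdistort _ _"] c_def[symmetric]
    by (rule cSUP_least) (auto intro: P1)

  define ci where "ci = bar_wass_inf \<mu> \<nu>"
  have cu: "\<bar>quantile (\<mu> i j) u - quantile (\<nu> i j) u\<bar> \<le> ci" if u: "u \<in> {0<..<1}" for i j u
  proof -
    obtain B1 where B1: "\<forall>u\<in>{0<..<1}. \<bar>quantile (\<mu> i j) u\<bar> \<le> B1" using QBND[OF mub] by blast
    obtain B2 where B2: "\<forall>u\<in>{0<..<1}. \<bar>quantile (\<nu> i j) u\<bar> \<le> B2" using QBND[OF nub] by blast
    have bdd: "bdd_above ((\<lambda>u. \<bar>quantile (\<mu> i j) u - quantile (\<nu> i j) u\<bar>) ` {0<..<1})"
    proof (rule bdd_aboveI2)
      fix u :: real assume "u \<in> {0<..<1}"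
      then show "\<bar>quantile (\<mu> i j) u - quantile (\<nu> i j) u\<bar> \<le> B1 + B2" using B1 B2 by force
    qed
    have "\<bar>quantile (\<mu> i j) u - quantile (\<nu> i j) u\<bar> \<le> wass_inf (\<mu> i j) (\<nu> i j)"
      unfolding wass_inf_def by (rule cSUP_upper[OF u bdd])
    also have "\<dots> \<le> ci"
    proof -
      have "(\<lambda>sa. wass_inf (\<mu> (fst sa) (snd sa)) (\<nu> (fst sa) (snd sa))) (i, j)
          \<le> (SUP sa\<in>UNIV. wass_inf (\<mu> (fst sa) (snd sa)) (\<nu> (fst sa) (snd sa)))"
        by (rule cSUP_upper[OF _ fin]) simp
      then show ?thesis unfolding ci_def bar_wass_inf_def by simp
    qed
    finally show ?thesis .
  qed
  have hat: "0 < (\<tau> (k - 1) + \<tau> k) / 2 \<and> (\<tau> (k - 1) + \<tau> k) / 2 < 1" if k: "k \<in> {1..m}" for k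
  proof -
    have km: "k - 1 < m" and ks: "Suc (k - 1) = k" using k by auto
    have "\<tau> (k - 1) < \<tau> k" using assms(12)[OF km] unfolding ks .
    moreover have "\<tau> 0 \<le> \<tau> (k - 1)" using km by (intro tau_mono[where \<tau>=\<tau> and m=m, OF assms(12)]) auto
    moreover have "\<tau> k \<le> \<tau> m" using k by (intro tau_mono[where \<tau>=\<tau> and m=m, OF assms(12)]) auto
    ultimately show ?thesis using assms(10,11) by simp
  qed
  have P2: "wass_inf (qproj m \<tau> (qdistort \<phi> (bellman P \<pi> R \<gamma> \<mu>)) s a) (qproj m \<tau> (qdistort \<phi> (bellman P \<pi> R \<gamma> \<nu>)) s a) \<le> \<gamma> * ci" for s a
    unfolding wass_inf_def
  proof (rule cSUP_least)
    show "{0<..<1::real} \<noteq> {}" by auto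
  next
    fix u :: real assume u: "u \<in> {0<..<1}"
    show "\<bar>quantile (qproj m \<tau> (qdistort \<phi> (bellman P \<pi> R \<gamma> \<mu>)) s a) u - quantile (qproj m \<tau> (qdistort \<phi> (bellman P \<pi> R \<gamma> \<nu>)) s a) u\<bar> \<le> \<gamma> * ci"
      unfolding qproj_def
    proof (rule PROJ)
      show "finite {1..m}" "{1..m} \<noteq> {}" using assms(9) by auto
      show "0 < u" "u < 1" using u by auto
    next
      fix k assume k: "k \<in> {1..m}"
      let ?h = "(\<tau> (k - 1) + \<tau> k) / 2"
      have h: "?h \<in> {0<..<1}" using hat[OF k] by simp
      have "\<bar>quantile (bellman P \<pi> R \<gamma> \<mu> s a) ?h - quantile (bellman P \<pi> R \<gamma> \<nu> s a) ?h\<bar> \<le> \<gamma> * ci"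
        by (rule part2_sa[OF mud nud cu]) (use h in auto)
      then show "\<bar>quantile (qdistort \<phi> (bellman P \<pi> R \<gamma> \<mu>) s a) ?h - quantile (qdistort \<phi> (bellman P \<pi> R \<gamma> \<nu>) s a) ?h\<bar> \<le> \<gamma> * ci"
        using QA[OF h] QB[OF h] by simp
    qed
  qed
  have part2: "bar_wass_inf (qproj m \<tau> (qdistort \<phi> (bellman P \<pi> R \<gamma> \<mu>))) (qproj m \<tau> (qdistort \<phi> (bellman P \<pi> R \<gamma> \<nu>))) \<le> \<gamma> * bar_wass_inf \<mu> \<nu>"
    unfolding bar_wass_inf_def[of "qproj _ _ _"] ci_def[symmetric]
    by (rule cSUP_least) (auto intro: P2)
  show ?thesis using part1 part2 by blast
qed

end
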